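(* Let $g,n\ge1$ be integers and $\mathcal{A},\mathcal{B}\in\mathcal{D}_{g,n}$ weight data. (1) If $\mathcal{A}\le\mathcal{B}$, then $M^{trop}_{g,\mathcal{A}}\subset M^{trop}_{g,\mathcal{B}}$. (2) If $\mathcal{A}$ and $\mathcal{B}$ are in the same chamber, then $M^{trop}_{g,\mathcal{A}}=M^{trop}_{g,\mathcal{B}}$. (3) If $\mathcal{A}$ and $\mathcal{B}$ are obtained one from the other by a permutation of coordinates, then $M^{trop}_{g,\mathcal{A}}$ is homeomorphic to $M^{trop}_{g,\mathcal{B}}$ through a relabeling homeomorphism. (4) If $\mathcal{A}$ and $\mathcal{B}$ are in chambers belonging to the same $S_n$-orbit, then $M^{trop}_{g,\mathcal{A}}$ is homeomorphic to $M^{trop}_{g,\mathcal{B}}$ through a relabeling homeomorphism. The same statements hold with $M^{trop}_{g,\cdot}$ replaced by $\overline{M}^{trop}_{g,\cdot}$ or by $\Delta_{g,\cdot}$.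
   Context: A weight datum is $\mathcal{A}=(a_1,\dots,a_n)$ with $a_i\in\mathbb{Q}\cap(0,1]$ and $2g-2+\sum_i a_i>0$; $\mathcal{D}_{g,n}\subset\mathbb{R}^n$ is the set of weight data; $\mathcal{A}\le\mathcal{B}$ means $a_i\le b_i$ for all $i$. For $S\subseteq\{1,\dots,n\}$ with $2\le|S|\le n$, the wall $w_S$ is the locus $\sum_{i\in S}a_i=1$; chambers are the connected components of the complement in $\mathcal{D}_{g,n}$ of all walls. $S_n$ acts on $\mathcal{D}_{g,n}$ by permuting coordinates, hence on chambers. A $(g,\mathcal{A})$-stable graph is a finite connected graph $G$ (loops and multiple edges allowed) with vertex weight $w:V(G)\to\mathbb{Z}_{\ge0}$ and $n$ legs labelled $1,\dots,n$ attached via $m:\{1,\dots,n\}\to V(G)$, with $b_1(G)+\sum_v w(v)=g$ and $2w(v)-2+|v|_E+|v|_{\mathcal{A}}>0$ for every vertex $v$, where $|v|_E$ is the number of edge half-edges at $v$ (loops counted twice) and $|v|_{\mathcal{A}}=\sum_{m(i)=v}a_i$. A $(g,\mathcal{A})$-stable tropical curve is such a graph with edge lengths in $\mathbb{R}_{>0}$; $M^{trop}_{g,\mathcal{A}}$ is the space of isomorphism classes of such curves, topologized as the colimit of the cones $\mathbb{R}_{\ge0}^{E(G)}$ glued along weighted edge contractions (length $0$ edges contracted) and isomorphisms. $\overline{M}^{trop}_{g,\mathcal{A}}$ is defined analogously allowing edge lengths in $\mathbb{R}_{>0}\cup\{\infty\}$, and $\Delta_{g,\mathcal{A}}$ is the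 subspace of $M^{trop}_{g,\mathcal{A}}$ of curves of total edge length $1$. A relabeling homeomorphism associated with $\sigma\in S_n$ sends a tropical curve to the curve obtained by relabeling its legs according to $\sigma$. *)

theory Defs
  imports "HOL-Analysis.Analysis"
begin

text \<open>A weight datum with n entries is represented as a function a :: nat => real whose
  relevant values are a 1, ..., a n; we normalise by requiring a i = 0 for i outside {1..n},
  so that the region of weight data is a subset of the product space nat => real (product
  topology), which is homeomorphic to R^n on that region.\<close>

definition wregion :: "nat \<Rightarrow> nat \<Rightarrow> (nat \<Rightarrow> real) set" where
  "wregion g n = {a. (\<forall>i\<in>{1..n}. 0 < a i \<and> a i \<le> 1) \<and> (\<forall>i. i \<notin> {1..n} \<longrightarrow> a i = 0)
                     \<and> 2 * real g - 2 + (\<Sum>i\<in>{1..n}. a i) > 0}"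

definition weight_datum :: "nat \<Rightarrow> nat \<Rightarrow> (nat \<Rightarrow> real) \<Rightarrow> bool" where
  "weight_datum g n a \<longleftrightarrow> a \<in> wregion g n \<and> (\<forall>i\<in>{1..n}. a i \<in> \<rat>)"

definition walls :: "nat \<Rightarrow> (nat \<Rightarrow> real) set" where
  "walls n = {a. \<exists>S. S \<subseteq> {1..n} \<and> 2 \<le> card S \<and> (\<Sum>i\<in>S. a i) = 1}"

definition chamber :: "nat \<Rightarrow> nat \<Rightarrow> (nat \<Rightarrow> real) \<Rightarrow> (nat \<Rightarrow> real) set" where
  "chamber g n a = connected_component_set (wregion g n - walls n) a"

definition in_some_chamber :: "nat \<Rightarrow> nat \<Rightarrow> (nat \<Rightarrow> real) \<Rightarrow> bool" where
  "in_some_chamber g n a \<longleftrightarrow> a \<in> wregion g n - walls n"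

definition same_chamber :: "nat \<Rightarrow> nat \<Rightarrow> (nat \<Rightarrow> real) \<Rightarrow> (nat \<Rightarrow> real) \<Rightarrow> bool" where
  "same_chamber g n a b \<longleftrightarrow> connected_component (wregion g n - walls n) a b"

definition perm_wt :: "nat \<Rightarrow> (nat \<Rightarrow> nat) \<Rightarrow> (nat \<Rightarrow> real) \<Rightarrow> (nat \<Rightarrow> real)" where
  "perm_wt n \<sigma> c = (\<lambda>i. if i \<in> {1..n} then c (\<sigma> i) else 0)"

definition le_wt :: "nat \<Rightarrow> (nat \<Rightarrow> real) \<Rightarrow> (nat \<Rightarrow> real) \<Rightarrow> bool" where
  "le_wt n a b \<longleftrightarrow> (\<forall>i\<in>{1..n}. a i \<le> b i)"

text \<open>Leg i (1 \<le> i \<le> n) is attached at vertex leg i. Edge lengths are extended reals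
  (the value \<infinity> is only allowed for the compactified space).\<close>

record tcurve =
  verts :: "nat set"
  edges :: "nat set"
  ends :: "nat \<Rightarrow> nat \<times> nat"
  wt :: "nat \<Rightarrow> nat"
  leg :: "nat \<Rightarrow> nat"
  len :: "nat \<Rightarrow> ereal"

definition adjrel :: "tcurve \<Rightarrow> nat set \<Rightarrow> (nat \<times> nat) set" where
  "adjrel C Z = (\<lambda>e. ends C e) ` Z \<union> (\<lambda>e. prod.swap (ends C e)) ` Z"

definition wf_graph :: "nat \<Rightarrow> tcurve \<Rightarrow> bool" where
  "wf_graph n C \<longleftrightarrow> finite (verts C) \<and> finite (edges C) \<and> verts C \<noteq> {}
     \<and> (\<forall>e\<in>edges C. fst (ends C e) \<in> verts C \<and> snd (ends C e) \<in> verts C)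
     \<and> (\<forall>i\<in>{1..n}. leg C i \<in> verts C)
     \<and> (\<forall>u\<in>verts C. \<forall>v\<in>verts C. (u, v) \<in> (adjrel C (edges C))\<^sup>*)"

text \<open>Genus b_1(G) + sum of vertex weights, with b_1 = |E| - |V| + 1 for a connected graph.\<close>
definition genus :: "tcurve \<Rightarrow> int" where
  "genus C = int (card (edges C)) - int (card (verts C)) + 1 + int (\<Sum>v\<in>verts C. wt C v)"

text \<open>Number of edge half-edges at v (loops counted twice).\<close>
definition val :: "tcurve \<Rightarrow> nat \<Rightarrow> nat" where
  "val C v = card {e\<in>edges C. fst (ends C e) = v} + card {e\<in>edges C. snd (ends C e) = v}"

definition legwt :: "nat \<Rightarrow> (nat \<Rightarrow> real) \<Rightarrow> tcurve \<Rightarrow> nat \<Rightarrow> real" where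
  "legwt n a C v = (\<Sum>i\<in>{i\<in>{1..n}. leg C i = v}. a i)"

definition stable_graph :: "nat \<Rightarrow> nat \<Rightarrow> (nat \<Rightarrow> real) \<Rightarrow> tcurve \<Rightarrow> bool" where
  "stable_graph g n a C \<longleftrightarrow> wf_graph n C \<and> genus C = int g
     \<and> (\<forall>v\<in>verts C. 2 * real (wt C v) - 2 + real (val C v) + legwt n a C v > 0)"

definition trop_curve :: "nat \<Rightarrow> nat \<Rightarrow> (nat \<Rightarrow> real) \<Rightarrow> tcurve \<Rightarrow> bool" where
  "trop_curve g n a C \<longleftrightarrow> stable_graph g n a C \<and> (\<forall>e\<in>edges C. 0 < len C e \<and> len C e < \<infinity>)"

definition ext_trop_curve :: "nat \<Rightarrow> nat \<Rightarrow> (nat \<Rightarrow> real) \<Rightarrow> tcurve \<Rightarrow> bool" where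
  "ext_trop_curve g n a C \<longleftrightarrow> stable_graph g n a C \<and> (\<forall>e\<in>edges C. 0 < len C e)"

definition curve_iso :: "nat \<Rightarrow> tcurve \<Rightarrow> tcurve \<Rightarrow> bool" where
  "curve_iso n C D \<longleftrightarrow> (\<exists>f h. bij_betw f (verts C) (verts D) \<and> bij_betw h (edges C) (edges D)
     \<and> (\<forall>v\<in>verts C. wt D (f v) = wt C v)
     \<and> (\<forall>i\<in>{1..n}. leg D i = f (leg C i))
     \<and> (\<forall>e\<in>edges C. len D (h e) = len C e
          \<and> (ends D (h e) = map_prod f f (ends C e) \<or> ends D (h e) = prod.swap (map_prod f f (ends C e)))))"

definition iso_class :: "nat \<Rightarrow> tcurve \<Rightarrow> tcurve set" where
  "iso_class n C = {D. curve_iso n C D}"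

text \<open>Contract the set Z of edges: each connected component of the subgraph (verts C, Z)
  becomes one vertex (named by its least element), whose weight is the sum of the weights plus
  the first Betti number |E_c| - |V_c| + 1 of the component.\<close>
definition zrep :: "tcurve \<Rightarrow> nat set \<Rightarrow> nat \<Rightarrow> nat" where
  "zrep C Z v = Min {u\<in>verts C. (v, u) \<in> (adjrel C Z)\<^sup>*}"

definition contract :: "tcurve \<Rightarrow> nat set \<Rightarrow> tcurve" where
  "contract C Z =
     \<lparr> verts = zrep C Z ` verts C,
       edges = edges C - Z,
       ends = (\<lambda>e. map_prod (zrep C Z) (zrep C Z) (ends C e)),
       wt = (\<lambda>u. ((\<Sum>v\<in>{v\<in>verts C. zrep C Z v = u}. wt C v)
                  + card {e\<in>Z. zrep C Z (fst (ends C e)) = u} + 1)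
                 - card {v\<in>verts C. zrep C Z v = u}),
       leg = (\<lambda>i. zrep C Z (leg C i)),
       len = len C \<rparr>"

definition cone_map :: "nat \<Rightarrow> tcurve \<Rightarrow> (nat \<Rightarrow> ereal) \<Rightarrow> tcurve set" where
  "cone_map n G l = iso_class n ((contract G {e\<in>edges G. l e = 0}) \<lparr>len := l\<rparr>)"

text \<open>The cone R_{\<ge>0}^{E(G)} resp. [0,\<infinity>]^{E(G)}, as a subset of nat => ereal
  (product topology; coordinates outside E(G) are fixed to 0).\<close>
definition cone :: "tcurve \<Rightarrow> (nat \<Rightarrow> ereal) set" where
  "cone G = {l. (\<forall>e\<in>edges G. 0 \<le> l e \<and> l e < \<infinity>) \<and> (\<forall>e. e \<notin> edges G \<longrightarrow> l e = 0)}"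

definition ext_cone :: "tcurve \<Rightarrow> (nat \<Rightarrow> ereal) set" where
  "ext_cone G = {l. (\<forall>e\<in>edges G. 0 \<le> l e) \<and> (\<forall>e. e \<notin> edges G \<longrightarrow> l e = 0)}"

text \<open>Colimit topology: the final topology on the set P of points with respect to all cone maps.\<close>
definition colim_top :: "tcurve set set \<Rightarrow> tcurve set \<Rightarrow> (tcurve \<Rightarrow> (nat \<Rightarrow> ereal) set)
                          \<Rightarrow> (tcurve \<Rightarrow> (nat \<Rightarrow> ereal) \<Rightarrow> tcurve set) \<Rightarrow> tcurve set topology" where
  "colim_top P Gs cn cm = topology (\<lambda>U. U \<subseteq> P \<and>
      (\<forall>G\<in>Gs. openin (top_of_set (cn G)) {l \<in> cn G. cm G l \<in> U}))"

definition tropM :: "nat \<Rightarrow> nat \<Rightarrow> (nat \<Rightarrow> real) \<Rightarrow> tcurve set topology" where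
  "tropM g n a = colim_top {iso_class n C | C. trop_curve g n a C}
                           {G. stable_graph g n a G} cone (cone_map n)"

definition tropMbar :: "nat \<Rightarrow> nat \<Rightarrow> (nat \<Rightarrow> real) \<Rightarrow> tcurve set topology" where
  "tropMbar g n a = colim_top {iso_class n C | C. ext_trop_curve g n a C}
                           {G. stable_graph g n a G} ext_cone (cone_map n)"

definition total_len :: "tcurve \<Rightarrow> ereal" where
  "total_len C = (\<Sum>e\<in>edges C. len C e)"

definition tropDelta :: "nat \<Rightarrow> nat \<Rightarrow> (nat \<Rightarrow> real) \<Rightarrow> tcurve set topology" where
  "tropDelta g n a = subtopology (tropM g n a)
      {p \<in> topspace (tropM g n a). \<exists>C\<in>p. total_len C = 1}"

definition relabel :: "(nat \<Rightarrow> nat) \<Rightarrow> tcurve \<Rightarrow> tcurve" where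
  "relabel \<sigma> C = C\<lparr>leg := (\<lambda>i. leg C (\<sigma> i))\<rparr>"

definition relabel_map :: "nat \<Rightarrow> (nat \<Rightarrow> nat) \<Rightarrow> tcurve set \<Rightarrow> tcurve set" where
  "relabel_map n \<sigma> p = {D. \<exists>C\<in>p. curve_iso n (relabel \<sigma> C) D}"

end

theory Submission
  imports Defs
begin

lemma istopI: "(\<And>S T. L S \<Longrightarrow> L T \<Longrightarrow> L (S \<inter> T)) \<Longrightarrow> (\<And>K. (\<And>U. U \<in> K \<Longrightarrow> L U) \<Longrightarrow> L (\<Union>K)) \<Longrightarrow> istopology L"
  unfolding istopology_def by blast

lemma colim_istop: "istopology (\<lambda>U. U \<subseteq> P \<and>
      (\<forall>G\<in>Gs. openin (top_of_set (cn G)) {l \<in> cn G. cm G l \<in> U}))"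
proof -
  have o1: "openin (top_of_set (cn G)) {l \<in> cn G. cm G l \<in> S \<inter> T}"
    if "openin (top_of_set (cn G)) {l \<in> cn G. cm G l \<in> S}"
       "openin (top_of_set (cn G)) {l \<in> cn G. cm G l \<in> T}" for G S T
  proof -
    have "openin (top_of_set (cn G)) ({l \<in> cn G. cm G l \<in> S} \<inter> {l \<in> cn G. cm G l \<in> T})"
      using that by blast
    moreover have "{l \<in> cn G. cm G l \<in> S} \<inter> {l \<in> cn G. cm G l \<in> T} = {l \<in> cn G. cm G l \<in> S \<inter> T}" by blast
    ultimately show ?thesis by simp
  qed
  have o2: "openin (top_of_set (cn G)) {l \<in> cn G. cm G l \<in> \<Union>K}"
    if "\<forall>U\<in>K. openin (top_of_set (cn G)) {l \<in> cn G. cm G l \<in> U}" for G K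
  proof -
    have "openin (top_of_set (cn G)) (\<Union>U\<in>K. {l \<in> cn G. cm G l \<in> U})"
      using that by (intro openin_Union) auto
    moreover have "(\<Union>U\<in>K. {l \<in> cn G. cm G l \<in> U}) = {l \<in> cn G. cm G l \<in> \<Union>K}" by blast
    ultimately show ?thesis by simp
  qed
  show ?thesis
  proof (rule istopI)
    fix S T assume a: "S \<subseteq> P \<and> (\<forall>G\<in>Gs. openin (top_of_set (cn G)) {l \<in> cn G. cm G l \<in> S})"
       "T \<subseteq> P \<and> (\<forall>G\<in>Gs. openin (top_of_set (cn G)) {l \<in> cn G. cm G l \<in> T})"
    show "S \<inter> T \<subseteq> P \<and> (\<forall>G\<in>Gs. openin (top_of_set (cn G)) {l \<in> cn G. cm G l \<in> S \<inter> T})"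
    proof (intro conjI ballI)
      show "S \<inter> T \<subseteq> P" using a by blast
      fix G assume "G \<in> Gs" then show "openin (top_of_set (cn G)) {l \<in> cn G. cm G l \<in> S \<inter> T}"
        using a o1[of G S T] by blast
    qed
  next
    fix K assume a: "\<And>U. U \<in> K \<Longrightarrow> U \<subseteq> P \<and> (\<forall>G\<in>Gs. openin (top_of_set (cn G)) {l \<in> cn G. cm G l \<in> U})"
    show "\<Union>K \<subseteq> P \<and> (\<forall>G\<in>Gs. openin (top_of_set (cn G)) {l \<in> cn G. cm G l \<in> \<Union>K})"
    proof (intro conjI ballI)
      show "\<Union>K \<subseteq> P" using a by blast
      fix G assume "G \<in> Gs" then show "openin (top_of_set (cn G)) {l \<in> cn G. cm G l \<in> \<Union>K}"
        using a o2[of K G] by blast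
    qed
  qed
qed

lemma openin_colim: "openin (colim_top P Gs cn cm) U \<longleftrightarrow> U \<subseteq> P \<and>
      (\<forall>G\<in>Gs. openin (top_of_set (cn G)) {l \<in> cn G. cm G l \<in> U})"
  unfolding colim_top_def using colim_istop[of P Gs cn cm] topology_inverse' by auto

lemma topspace_colim:
  assumes "\<And>G l. G \<in> Gs \<Longrightarrow> l \<in> cn G \<Longrightarrow> cm G l \<in> P"
  shows "topspace (colim_top P Gs cn cm) = P"
proof -
  have e: "{l \<in> cn G. cm G l \<in> P} = cn G" if "G \<in> Gs" for G using assms that by auto
  have "openin (colim_top P Gs cn cm) P"
    unfolding openin_colim using e by auto
  moreover have "topspace (colim_top P Gs cn cm) \<subseteq> P"
    by (metis openin_colim openin_topspace)
  ultimately show ?thesis by (meson openin_subset subset_antisym)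
qed

lemma adjrel_iff: "(x,y) \<in> adjrel C Z \<longleftrightarrow> (\<exists>e\<in>Z. ends C e = (x,y) \<or> ends C e = (y,x))"
proof
  assume "(x,y) \<in> adjrel C Z"
  then show "\<exists>e\<in>Z. ends C e = (x,y) \<or> ends C e = (y,x)"
    unfolding adjrel_def by (auto simp: prod.swap_def)
next
  assume "\<exists>e\<in>Z. ends C e = (x,y) \<or> ends C e = (y,x)"
  then obtain e where "e \<in> Z" "ends C e = (x,y) \<or> ends C e = (y,x)" by blast
  then show "(x,y) \<in> adjrel C Z" unfolding adjrel_def
    by (metis UnI1 UnI2 image_eqI swap_simp)
qed

lemma adjrel_mono: "Y \<subseteq> Z \<Longrightarrow> adjrel C Y \<subseteq> adjrel C Z"
  unfolding adjrel_def by blast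

lemma adjrel_rt_mono: "Y \<subseteq> Z \<Longrightarrow> (x,y) \<in> (adjrel C Y)\<^sup>* \<Longrightarrow> (x,y) \<in> (adjrel C Z)\<^sup>*"
  using rtrancl_mono[OF adjrel_mono[of Y Z C]] by blast

lemma adjrel_sym: "sym (adjrel C Z)"
  unfolding sym_def by (simp add: adjrel_iff) blast

lemma adj_rt_sym: "(x,y) \<in> (adjrel C Z)\<^sup>* \<Longrightarrow> (y,x) \<in> (adjrel C Z)\<^sup>*"
  by (rule symD[OF sym_rtrancl[OF adjrel_sym]])

lemma adj_rt_closed:
  assumes "(x,y) \<in> (adjrel C Z)\<^sup>*" "x \<in> V" "\<forall>e\<in>Z. fst (ends C e) \<in> V \<and> snd (ends C e) \<in> V"
  shows "y \<in> V"
  using assms(1) proof (induction rule: rtrancl_induct)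
  case base then show ?case using assms(2) .
next
  case (step y z)
  then obtain e where "e \<in> Z" "ends C e = (y,z) \<or> ends C e = (z,y)" by (auto simp: adjrel_iff)
  then show ?case using assms(3) by (metis fst_conv snd_conv)
qed

lemma restrict_path:
  assumes "(x,y) \<in> (adjrel C F)\<^sup>*" "x \<in> S" "\<forall>e\<in>F. fst (ends C e) \<in> S \<longleftrightarrow> snd (ends C e) \<in> S"
  shows "(x,y) \<in> (adjrel C {e\<in>F. fst (ends C e) \<in> S})\<^sup>* \<and> y \<in> S"
  using assms(1) proof (induction rule: rtrancl_induct)
  case base then show ?case using assms(2) by simp
next
  case (step y z)
  then obtain e where e: "e \<in> F" "ends C e = (y,z) \<or> ends C e = (z,y)" by (auto simp: adjrel_iff)
  have yS: "y \<in> S" using step by blast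
  have fS: "fst (ends C e) \<in> S" "snd (ends C e) \<in> S" using e yS assms(3) by (metis fst_conv snd_conv)+
  have "(y,z) \<in> adjrel C {e\<in>F. fst (ends C e) \<in> S}" unfolding adjrel_iff using e fS by blast
  moreover have "z \<in> S" using e fS by (metis fst_conv snd_conv)
  ultimately show ?case using step by (meson rtrancl.rtrancl_into_rtrancl)
qed

lemma ST:
  assumes "finite F" "finite K" "K \<noteq> {}" "\<forall>e\<in>F. fst (ends C e) \<in> K \<and> snd (ends C e) \<in> K"
    "\<forall>x\<in>K. \<forall>y\<in>K. (x,y) \<in> (adjrel C F)\<^sup>*"
  shows "card K \<le> card F + 1"
  using assms
proof (induction "card F" arbitrary: F K rule: less_induct)
  case less
  show ?case
  proof (cases "F = {}")
    case True
    then have "adjrel C F = {}" unfolding adjrel_def by simp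
    then have "\<forall>x\<in>K. \<forall>y\<in>K. x = y" using less.prems(5) by simp
    then have "card K \<le> 1" using less.prems(2) by (simp add: card_le_Suc0_iff_eq)
    then show ?thesis by simp
  next
    case False
    then obtain e where e: "e \<in> F" by blast
    obtain a b where ab: "ends C e = (a,b)" by fastforce
    define F' where "F' = F - {e}"
    have fF': "finite F'" using less.prems(1) F'_def by simp
    have cF: "card F = card F' + 1" using e less.prems(1) F'_def
      by (metis Suc_eq_plus1 card_Suc_Diff1)
    have aK: "a \<in> K" and bK: "b \<in> K" using less.prems(4) e ab by (metis fst_conv snd_conv)+
    have F'K: "\<forall>e\<in>F'. fst (ends C e) \<in> K \<and> snd (ends C e) \<in> K" using less.prems(4) F'_def by blast
    have conn: "(a,x) \<in> (adjrel C F')\<^sup>* \<or> (b,x) \<in> (adjrel C F')\<^sup>*" if "(a,x) \<in> (adjrel C F)\<^sup>*" for x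
      using that proof (induction rule: rtrancl_induct)
      case base then show ?case by simp
    next
      case (step y z)
      then obtain e' where e': "e' \<in> F" "ends C e' = (y,z) \<or> ends C e' = (z,y)" by (auto simp: adjrel_iff)
      show ?case
      proof (cases "e' = e")
        case True
        then have "z = a \<or> z = b" using e' ab by auto
        then show ?thesis by auto
      next
        case False
        then have "(y,z) \<in> adjrel C F'" unfolding adjrel_iff F'_def using e' by blast
        then show ?thesis using step.IH by (meson rtrancl.rtrancl_into_rtrancl)
      qed
    qed
    have conn2: "(a,x) \<in> (adjrel C F')\<^sup>* \<or> (b,x) \<in> (adjrel C F')\<^sup>*" if "x \<in> K" for x
      using conn less.prems(5) aK that by blast
    show ?thesis
    proof (cases "(a,b) \<in> (adjrel C F')\<^sup>*")
      case True
      have "(a,x) \<in> (adjrel C F')\<^sup>*" if "x \<in> K" for x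
        using conn2[OF that] True by (meson rtrancl_trans)
      then have "\<forall>x\<in>K. \<forall>y\<in>K. (x,y) \<in> (adjrel C F')\<^sup>*"
        by (meson adj_rt_sym rtrancl_trans)
      moreover have "card F' < card F" using cF by simp
      ultimately have "card K \<le> card F' + 1" using less.hyps[of F' K] fF' less.prems(2,3) F'K by blast
      then show ?thesis using cF by simp
    next
      case False
      define Ka where "Ka = {x\<in>K. (a,x) \<in> (adjrel C F')\<^sup>*}"
      define Kb where "Kb = {x\<in>K. (b,x) \<in> (adjrel C F')\<^sup>*}"
      define Fa where "Fa = {e\<in>F'. fst (ends C e) \<in> Ka}"
      define Fb where "Fb = {e\<in>F'. fst (ends C e) \<in> Kb}"
      have disj: "Ka \<inter> Kb = {}"
      proof -
        { fix x assume "x \<in> Ka" "x \<in> Kb"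
          then have "(a,x) \<in> (adjrel C F')\<^sup>*" "(b,x) \<in> (adjrel C F')\<^sup>*" by (simp_all add: Ka_def Kb_def)
          then have "(a,b) \<in> (adjrel C F')\<^sup>*" using adj_rt_sym rtrancl_trans by metis
          with False have False by simp }
        then show ?thesis by blast
      qed
      have KU: "K = Ka \<union> Kb" unfolding Ka_def Kb_def using conn2 by auto
      have adjF': "(fst (ends C e), snd (ends C e)) \<in> adjrel C F'" if "e \<in> F'" for e
        unfolding adjrel_iff using that by force
      have clos: "\<forall>e\<in>F'. fst (ends C e) \<in> Ka \<longleftrightarrow> snd (ends C e) \<in> Ka"
        "\<forall>e\<in>F'. fst (ends C e) \<in> Kb \<longleftrightarrow> snd (ends C e) \<in> Kb"
      proof -
        have closg: "\<forall>e\<in>F'. fst (ends C e) \<in> {x\<in>K. (c,x) \<in> (adjrel C F')\<^sup>*} \<longleftrightarrow> snd (ends C e) \<in> {x\<in>K. (c,x) \<in> (adjrel C F')\<^sup>*}" for c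
        proof
          fix e assume e: "e \<in> F'"
          have 1: "(fst (ends C e), snd (ends C e)) \<in> adjrel C F'" using adjF' e .
          have 2: "(snd (ends C e), fst (ends C e)) \<in> adjrel C F'" using 1 adjrel_sym by (metis symD)
          show "fst (ends C e) \<in> {x\<in>K. (c,x) \<in> (adjrel C F')\<^sup>*} \<longleftrightarrow> snd (ends C e) \<in> {x\<in>K. (c,x) \<in> (adjrel C F')\<^sup>*}"
            using 1 2 F'K e by (auto intro: rtrancl.rtrancl_into_rtrancl)
        qed
        show "\<forall>e\<in>F'. fst (ends C e) \<in> Ka \<longleftrightarrow> snd (ends C e) \<in> Ka" unfolding Ka_def by (rule closg)
        show "\<forall>e\<in>F'. fst (ends C e) \<in> Kb \<longleftrightarrow> snd (ends C e) \<in> Kb" unfolding Kb_def by (rule closg)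
      qed
      have FU: "F' = Fa \<union> Fb" unfolding Fa_def Fb_def using KU F'K by auto
      have Fdisj: "Fa \<inter> Fb = {}" unfolding Fa_def Fb_def using disj by auto
      have ca: "card F' = card Fa + card Fb" using FU Fdisj fF'
        by (metis card_Un_disjoint finite_Un)
      have cK: "card K = card Ka + card Kb" using KU disj less.prems(2)
        by (metis card_Un_disjoint finite_Un)
      have IHa: "card Ka \<le> card Fa + 1"
      proof (rule less.hyps)
        show "card Fa < card F" using ca cF by simp
        show "finite Fa" using FU fF' by simp
        show "finite Ka" using less.prems(2) Ka_def by simp
        show "Ka \<noteq> {}" using aK Ka_def by auto
        show "\<forall>e\<in>Fa. fst (ends C e) \<in> Ka \<and> snd (ends C e) \<in> Ka" using clos Fa_def by auto
        show "\<forall>x\<in>Ka. \<forall>y\<in>Ka. (x, y) \<in> (adjrel C Fa)\<^sup>*"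
        proof (intro ballI)
          fix x y assume xy: "x \<in> Ka" "y \<in> Ka"
          then have h: "(a,x) \<in> (adjrel C F')\<^sup>*" "(a,y) \<in> (adjrel C F')\<^sup>*" unfolding Ka_def by auto
          have "(x,y) \<in> (adjrel C F')\<^sup>*" by (rule rtrancl_trans[OF adj_rt_sym[OF h(1)] h(2)])
          then show "(x, y) \<in> (adjrel C Fa)\<^sup>*" using restrict_path[of x y C F' Ka] xy clos Fa_def by blast
        qed
      qed
      have IHb: "card Kb \<le> card Fb + 1"
      proof (rule less.hyps)
        show "card Fb < card F" using ca cF by simp
        show "finite Fb" using FU fF' by simp
        show "finite Kb" using less.prems(2) Kb_def by simp
        show "Kb \<noteq> {}" using bK Kb_def by auto
        show "\<forall>e\<in>Fb. fst (ends C e) \<in> Kb \<and> snd (ends C e) \<in> Kb" using clos Fb_def by auto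
        show "\<forall>x\<in>Kb. \<forall>y\<in>Kb. (x, y) \<in> (adjrel C Fb)\<^sup>*"
        proof (intro ballI)
          fix x y assume xy: "x \<in> Kb" "y \<in> Kb"
          then have h: "(b,x) \<in> (adjrel C F')\<^sup>*" "(b,y) \<in> (adjrel C F')\<^sup>*" unfolding Kb_def by auto
          have "(x,y) \<in> (adjrel C F')\<^sup>*" by (rule rtrancl_trans[OF adj_rt_sym[OF h(1)] h(2)])
          then show "(x, y) \<in> (adjrel C Fb)\<^sup>*" using restrict_path[of x y C F' Kb] xy clos Fb_def by blast
        qed
      qed
      show ?thesis using IHa IHb ca cK cF by simp
    qed
  qed
qed

lemma zrep_props:
  assumes "finite (verts C)" "v \<in> verts C"
  shows "zrep C Z v \<in> verts C" "(v, zrep C Z v) \<in> (adjrel C Z)\<^sup>*"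
proof -
  let ?S = "{u\<in>verts C. (v,u) \<in> (adjrel C Z)\<^sup>*}"
  have "finite ?S" using assms(1) by simp
  moreover have "v \<in> ?S" using assms(2) by simp
  ultimately have "Min ?S \<in> ?S" by (intro Min_in) auto
  then show "zrep C Z v \<in> verts C" "(v, zrep C Z v) \<in> (adjrel C Z)\<^sup>*" unfolding zrep_def by auto
qed

lemma zrep_le:
  assumes "finite (verts C)" "u \<in> verts C" "(v,u) \<in> (adjrel C Z)\<^sup>*"
  shows "zrep C Z v \<le> u"
  unfolding zrep_def using assms by (intro Min_le) auto

lemma zrep_eq:
  assumes "(v,w) \<in> (adjrel C Z)\<^sup>*"
  shows "zrep C Z v = zrep C Z w"
proof -
  have "{u\<in>verts C. (v,u) \<in> (adjrel C Z)\<^sup>*} = {u\<in>verts C. (w,u) \<in> (adjrel C Z)\<^sup>*}"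
  proof (intro Collect_cong conj_cong refl iffI)
    fix u assume "(v,u) \<in> (adjrel C Z)\<^sup>*"
    then show "(w,u) \<in> (adjrel C Z)\<^sup>*" by (rule rtrancl_trans[OF adj_rt_sym[OF assms]])
  next
    fix u assume "(w,u) \<in> (adjrel C Z)\<^sup>*"
    then show "(v,u) \<in> (adjrel C Z)\<^sup>*" by (rule rtrancl_trans[OF assms])
  qed
  then show ?thesis unfolding zrep_def by simp
qed

lemma zrep_eq_iff:
  assumes "finite (verts C)" "v \<in> verts C" "w \<in> verts C"
  shows "zrep C Z v = zrep C Z w \<longleftrightarrow> (v,w) \<in> (adjrel C Z)\<^sup>*"
proof
  assume e: "zrep C Z v = zrep C Z w"
  have "(v, zrep C Z v) \<in> (adjrel C Z)\<^sup>*" using zrep_props assms by blast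
  moreover have "(zrep C Z w, w) \<in> (adjrel C Z)\<^sup>*" using zrep_props(2)[OF assms(1,3)] by (rule adj_rt_sym)
  ultimately show "(v,w) \<in> (adjrel C Z)\<^sup>*" using e by simp
next
  assume "(v,w) \<in> (adjrel C Z)\<^sup>*" then show "zrep C Z v = zrep C Z w" by (rule zrep_eq)
qed

lemma zrep_idem:
  assumes "finite (verts C)" "v \<in> verts C"
  shows "zrep C Z (zrep C Z v) = zrep C Z v"
  using zrep_eq[OF zrep_props(2)[OF assms]] by simp

lemma edge_adj: "e \<in> Z \<Longrightarrow> (fst (ends C e), snd (ends C e)) \<in> adjrel C Z"
  unfolding adjrel_iff by (rule bexI[of _ e]) simp_all

lemma edge_zrep:
  assumes "e \<in> Z"
  shows "zrep C Z (snd (ends C e)) = zrep C Z (fst (ends C e))"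
  using zrep_eq[OF r_into_rtrancl[OF edge_adj[OF assms]]] by (rule sym)

lemma comp_ST:
  assumes fin: "finite (verts C)" "finite Z" and ez: "\<forall>e\<in>Z. fst (ends C e) \<in> verts C \<and> snd (ends C e) \<in> verts C"
  shows "card {v\<in>verts C. zrep C Z v = u} \<le> card {e\<in>Z. zrep C Z (fst (ends C e)) = u} + 1"
proof (cases "{v\<in>verts C. zrep C Z v = u} = {}")
  case True then show ?thesis unfolding True by simp
next
  case False
  define K where "K = {v\<in>verts C. zrep C Z v = u}"
  define F where "F = {e\<in>Z. zrep C Z (fst (ends C e)) = u}"
  have FK: "F = {e\<in>Z. fst (ends C e) \<in> K}" unfolding F_def K_def using ez by auto
  have clos: "\<forall>e\<in>Z. fst (ends C e) \<in> K \<longleftrightarrow> snd (ends C e) \<in> K"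
  proof
    fix e assume e: "e \<in> Z"
    show "fst (ends C e) \<in> K \<longleftrightarrow> snd (ends C e) \<in> K"
      using ez e edge_zrep[OF e, of C] unfolding K_def by auto
  qed
  show ?thesis unfolding K_def[symmetric] F_def[symmetric]
  proof (rule ST)
    show "finite F" using fin F_def by simp
    show "finite K" using fin K_def by simp
    show "K \<noteq> {}" using False K_def by simp
    show "\<forall>e\<in>F. fst (ends C e) \<in> K \<and> snd (ends C e) \<in> K" using FK clos by auto
    show "\<forall>x\<in>K. \<forall>y\<in>K. (x, y) \<in> (adjrel C F)\<^sup>*"
    proof (intro ballI)
      fix x y assume xy: "x \<in> K" "y \<in> K"
      then have "(x,y) \<in> (adjrel C Z)\<^sup>*" using xy zrep_eq_iff[OF fin(1), of x y Z] unfolding K_def by simp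
      then have "(x,y) \<in> (adjrel C {e\<in>Z. fst (ends C e) \<in> K})\<^sup>*" using restrict_path[of x y C Z K] xy clos by blast
      then show "(x,y) \<in> (adjrel C F)\<^sup>*" unfolding FK .
    qed
  qed
qed

lemma fiber_sum:
  assumes "finite S" "finite T"
  shows "(\<Sum>y\<in>T. \<Sum>x\<in>{x\<in>S. g x = y}. h x) = (\<Sum>x\<in>{x\<in>S. g x \<in> T}. h x)"
proof -
  have "(\<Sum>y\<in>T. \<Sum>x\<in>{x\<in>{x\<in>S. g x \<in> T}. g x = y}. h x) = (\<Sum>x\<in>{x\<in>S. g x \<in> T}. h x)"
    using assms by (intro sum.group) auto
  moreover have "(\<Sum>y\<in>T. \<Sum>x\<in>{x\<in>{x\<in>S. g x \<in> T}. g x = y}. h x) = (\<Sum>y\<in>T. \<Sum>x\<in>{x\<in>S. g x = y}. h x)"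
    by (intro sum.cong refl) auto
  ultimately show ?thesis by simp
qed

lemma fiber_card:
  assumes "finite S" "finite T"
  shows "(\<Sum>y\<in>T. card {x\<in>S. g x = y}) = card {x\<in>S. g x \<in> T}"
  using fiber_sum[OF assms, where g=g and h="\<lambda>_. 1::nat"] by simp

lemma contract_simps[simp]:
  "verts (contract G Z) = zrep G Z ` verts G"
  "edges (contract G Z) = edges G - Z"
  "ends (contract G Z) e = map_prod (zrep G Z) (zrep G Z) (ends G e)"
  "leg (contract G Z) i = zrep G Z (leg G i)"
  "len (contract G Z) = len G"
  by (simp_all add: contract_def)

lemma wf_ends: "wf_graph n G \<Longrightarrow> e \<in> edges G \<Longrightarrow> fst (ends G e) \<in> verts G \<and> snd (ends G e) \<in> verts G"
  unfolding wf_graph_def by blast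

lemma wf_endsZ: "wf_graph n G \<Longrightarrow> Z \<subseteq> edges G \<Longrightarrow> \<forall>e\<in>Z. fst (ends G e) \<in> verts G \<and> snd (ends G e) \<in> verts G"
  using wf_ends by blast

lemma contract_wt_int:
  assumes "wf_graph n G" "Z \<subseteq> edges G"
  shows "int (wt (contract G Z) u) = int (\<Sum>v\<in>{v\<in>verts G. zrep G Z v = u}. wt G v)
     + int (card {e\<in>Z. zrep G Z (fst (ends G e)) = u}) + 1 - int (card {v\<in>verts G. zrep G Z v = u})"
proof -
  have fin: "finite (verts G)" "finite Z" using assms unfolding wf_graph_def by (auto intro: finite_subset)
  have le: "card {v\<in>verts G. zrep G Z v = u} \<le> card {e\<in>Z. zrep G Z (fst (ends G e)) = u} + 1"
    using comp_ST[OF fin wf_endsZ[OF assms]] .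
  show ?thesis unfolding contract_def using le by (simp add: of_nat_diff)
qed

lemma contract_conn:
  assumes "wf_graph n G" "Z \<subseteq> edges G" "(x,y) \<in> (adjrel G (edges G))\<^sup>*" "x \<in> verts G"
  shows "(zrep G Z x, zrep G Z y) \<in> (adjrel (contract G Z) (edges G - Z))\<^sup>*"
  using assms(3) proof (induction rule: rtrancl_induct)
  case base then show ?case by simp
next
  case (step y z)
  then obtain e where e: "e \<in> edges G" "ends G e = (y,z) \<or> ends G e = (z,y)" by (auto simp: adjrel_iff)
  show ?case
  proof (cases "e \<in> Z")
    case True
    then have "(y,z) \<in> adjrel G Z" unfolding adjrel_iff using e by blast
    then have "zrep G Z y = zrep G Z z" by (intro zrep_eq) simp
    then show ?thesis using step.IH by simp
  next
    case False
    then have "(zrep G Z y, zrep G Z z) \<in> adjrel (contract G Z) (edges G - Z)"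
      unfolding adjrel_iff using e by (intro bexI[of _ e]) auto
    then show ?thesis by (rule rtrancl.rtrancl_into_rtrancl[OF step.IH])
  qed
qed

lemma contract_wf:
  assumes "wf_graph n G" "Z \<subseteq> edges G"
  shows "wf_graph n (contract G Z)"
proof -
  have fin: "finite (verts G)" "finite (edges G)" "verts G \<noteq> {}" using assms(1) unfolding wf_graph_def by auto
  have legs: "\<forall>i\<in>{1..n}. leg G i \<in> verts G" using assms(1) unfolding wf_graph_def by auto
  have conn: "\<forall>u\<in>verts G. \<forall>v\<in>verts G. (u, v) \<in> (adjrel G (edges G))\<^sup>*" using assms(1) unfolding wf_graph_def by auto
  show ?thesis unfolding wf_graph_def
  proof (intro conjI ballI)
    show "finite (verts (contract G Z))" "finite (edges (contract G Z))" "verts (contract G Z) \<noteq> {}"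
      using fin by auto
  next
    fix e assume "e \<in> edges (contract G Z)"
    then have "e \<in> edges G" by simp
    then show "fst (ends (contract G Z) e) \<in> verts (contract G Z)" "snd (ends (contract G Z) e) \<in> verts (contract G Z)"
      using wf_ends[OF assms(1)] by auto
  next
    fix i assume "i \<in> {1..n}" then show "leg (contract G Z) i \<in> verts (contract G Z)" using legs by simp
  next
    fix u v assume "u \<in> verts (contract G Z)" "v \<in> verts (contract G Z)"
    then obtain x y where xy: "x \<in> verts G" "y \<in> verts G" "u = zrep G Z x" "v = zrep G Z y" by auto
    then show "(u, v) \<in> (adjrel (contract G Z) (edges (contract G Z)))\<^sup>*"
      using contract_conn[OF assms, of x y] conn by simp
  qed
qed

lemma contract_genus:
  assumes "wf_graph n G" "Z \<subseteq> edges G"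
  shows "genus (contract G Z) = genus G"
proof -
  define r where "r = zrep G Z"
  define V where "V = verts G"
  have fin: "finite V" "finite (edges G)" "finite Z" using assms unfolding wf_graph_def V_def by (auto intro: finite_subset)
  have ez: "\<forall>e\<in>Z. fst (ends G e) \<in> V" using wf_endsZ[OF assms] V_def by blast
  have w: "int (wt (contract G Z) u) = int (\<Sum>v\<in>{v\<in>V. r v = u}. wt G v)
     + int (card {e\<in>Z. r (fst (ends G e)) = u}) + 1 - int (card {v\<in>V. r v = u})" for u
    using contract_wt_int[OF assms] unfolding r_def V_def .
  have s1: "(\<Sum>u\<in>r ` V. (\<Sum>v\<in>{v\<in>V. r v = u}. wt G v)) = (\<Sum>v\<in>V. wt G v)"
    using fin by (intro sum.group) auto
  have s2: "(\<Sum>u\<in>r ` V. card {e\<in>Z. r (fst (ends G e)) = u}) = card Z"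
  proof -
    have "(\<Sum>u\<in>r ` V. card {e\<in>Z. r (fst (ends G e)) = u}) = card {e\<in>Z. r (fst (ends G e)) \<in> r ` V}"
      using fin by (intro fiber_card) auto
    also have "{e\<in>Z. r (fst (ends G e)) \<in> r ` V} = Z" using ez by auto
    finally show ?thesis .
  qed
  have s3: "(\<Sum>u\<in>r ` V. card {v\<in>V. r v = u}) = card V"
  proof -
    have "(\<Sum>u\<in>r ` V. card {v\<in>V. r v = u}) = card {v\<in>V. r v \<in> r ` V}"
      using fin by (intro fiber_card) auto
    also have "{v\<in>V. r v \<in> r ` V} = V" by auto
    finally show ?thesis .
  qed
  have "int (\<Sum>u\<in>r ` V. wt (contract G Z) u) = (\<Sum>u\<in>r ` V. int (wt (contract G Z) u))" by simp
  also have "\<dots> = (\<Sum>u\<in>r ` V. int (\<Sum>v\<in>{v\<in>V. r v = u}. wt G v)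
     + int (card {e\<in>Z. r (fst (ends G e)) = u}) + 1 - int (card {v\<in>V. r v = u}))" using w by simp
  also have "\<dots> = int (\<Sum>u\<in>r ` V. (\<Sum>v\<in>{v\<in>V. r v = u}. wt G v)) + int (\<Sum>u\<in>r ` V. card {e\<in>Z. r (fst (ends G e)) = u})
      + int (card (r ` V)) - int (\<Sum>u\<in>r ` V. card {v\<in>V. r v = u})"
    by (simp add: sum.distrib sum_subtractf)
  also have "\<dots> = int (\<Sum>v\<in>V. wt G v) + int (card Z) + int (card (r ` V)) - int (card V)"
    using s1 s2 s3 by simp
  finally have sw: "int (\<Sum>u\<in>r ` V. wt (contract G Z) u) = int (\<Sum>v\<in>V. wt G v) + int (card Z) + int (card (r ` V)) - int (card V)" .
  have ce: "card (edges G - Z) = card (edges G) - card Z" using assms(2) fin by (simp add: card_Diff_subset)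
  have "card Z \<le> card (edges G)" using assms(2) fin by (simp add: card_mono)
  then show ?thesis unfolding genus_def using sw ce by (simp add: r_def V_def of_nat_diff)
qed

lemma split_card:
  assumes "Z \<subseteq> E" "finite E"
  shows "card {e\<in>E. P e} = card {e\<in>E - Z. P e} + card {e\<in>Z. P e}"
proof -
  have "{e\<in>E. P e} = {e\<in>E - Z. P e} \<union> {e\<in>Z. P e}" using assms by auto
  moreover have "{e\<in>E - Z. P e} \<inter> {e\<in>Z. P e} = {}" by auto
  ultimately show ?thesis using assms by (simp add: card_Un_disjoint finite_subset)
qed

lemma contract_stable_vertex:
  assumes "stable_graph g n a G" "Z \<subseteq> edges G" "u \<in> verts (contract G Z)"
  shows "2 * real (wt (contract G Z) u) - 2 + real (val (contract G Z) u) + legwt n a (contract G Z) u > 0"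
proof -
  have wf: "wf_graph n G" using assms(1) unfolding stable_graph_def by blast
  have st: "\<forall>v\<in>verts G. 2 * real (wt G v) - 2 + real (val G v) + legwt n a G v > 0"
    using assms(1) unfolding stable_graph_def by blast
  define r where "r = zrep G Z"
  define V where "V = verts G"
  define E where "E = edges G"
  define K where "K = {v\<in>V. r v = u}"
  define F where "F = {e\<in>Z. r (fst (ends G e)) = u}"
  have fin: "finite V" "finite E" "finite Z" using wf assms(2) unfolding wf_graph_def V_def E_def by (auto intro: finite_subset)
  have ends: "\<forall>e\<in>E. fst (ends G e) \<in> V \<and> snd (ends G e) \<in> V" using wf_ends[OF wf] E_def V_def by blast
  have legs: "\<forall>i\<in>{1..n}. leg G i \<in> V" using wf unfolding wf_graph_def V_def by blast
  have ZE: "Z \<subseteq> E" using assms(2) E_def by simp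
  obtain v0 where v0: "v0 \<in> V" "u = r v0" using assms(3) unfolding r_def V_def by auto
  have Kne: "K \<noteq> {}" using v0 K_def by auto
  have finK: "finite K" using fin K_def by simp
  have w: "int (wt (contract G Z) u) = int (\<Sum>v\<in>K. wt G v) + int (card F) + 1 - int (card K)"
    using contract_wt_int[OF wf assms(2)] unfolding r_def V_def K_def F_def .
  have wr: "real (wt (contract G Z) u) = (\<Sum>v\<in>K. real (wt G v)) + real (card F) + 1 - real (card K)"
  proof -
    have h: "real_of_int (int (wt (contract G Z) u)) = real_of_int (int (\<Sum>v\<in>K. wt G v) + int (card F) + 1 - int (card K))"
      by (rule arg_cong[OF w])
    then show ?thesis by simp
  qed
  have vfst: "(\<Sum>v\<in>K. card {e\<in>E. fst (ends G e) = v}) = card {e\<in>E. r (fst (ends G e)) = u}"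
  proof -
    have "(\<Sum>v\<in>K. card {e\<in>E. fst (ends G e) = v}) = card {e\<in>E. fst (ends G e) \<in> K}"
      using fin finK by (intro fiber_card) auto
    also have "{e\<in>E. fst (ends G e) \<in> K} = {e\<in>E. r (fst (ends G e)) = u}" using ends K_def by auto
    finally show ?thesis .
  qed
  have vsnd: "(\<Sum>v\<in>K. card {e\<in>E. snd (ends G e) = v}) = card {e\<in>E. r (snd (ends G e)) = u}"
  proof -
    have "(\<Sum>v\<in>K. card {e\<in>E. snd (ends G e) = v}) = card {e\<in>E. snd (ends G e) \<in> K}"
      using fin finK by (intro fiber_card) auto
    also have "{e\<in>E. snd (ends G e) \<in> K} = {e\<in>E. r (snd (ends G e)) = u}" using ends K_def by auto
    finally show ?thesis .
  qed
  have c1: "card {e\<in>E. r (fst (ends G e)) = u} = card {e\<in>E - Z. r (fst (ends G e)) = u} + card F"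
    unfolding F_def using split_card[OF ZE fin(2)] .
  have FZ: "{e\<in>Z. r (snd (ends G e)) = u} = F" unfolding F_def r_def
  proof (rule Collect_cong)
    fix e show "(e \<in> Z \<and> zrep G Z (snd (ends G e)) = u) = (e \<in> Z \<and> zrep G Z (fst (ends G e)) = u)"
      using edge_zrep[of e Z G] by auto
  qed
  have c2: "card {e\<in>E. r (snd (ends G e)) = u} = card {e\<in>E - Z. r (snd (ends G e)) = u} + card F"
    using split_card[OF ZE fin(2), of "\<lambda>e. r (snd (ends G e)) = u"] FZ by simp
  have valC: "val (contract G Z) u = card {e\<in>E - Z. r (fst (ends G e)) = u} + card {e\<in>E - Z. r (snd (ends G e)) = u}"
    unfolding val_def r_def E_def by simp
  have sval: "(\<Sum>v\<in>K. real (val G v)) = real (val (contract G Z) u) + 2 * real (card F)"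
  proof -
    have "(\<Sum>v\<in>K. val G v) = (\<Sum>v\<in>K. card {e\<in>E. fst (ends G e) = v}) + (\<Sum>v\<in>K. card {e\<in>E. snd (ends G e) = v})"
      unfolding val_def E_def by (simp add: sum.distrib)
    also have "\<dots> = val (contract G Z) u + 2 * card F" using vfst vsnd c1 c2 valC by simp
    finally have h0: "(\<Sum>v\<in>K. val G v) = val (contract G Z) u + 2 * card F" .
    have "real (\<Sum>v\<in>K. val G v) = real (val (contract G Z) u + 2 * card F)" by (rule arg_cong[OF h0])
    then show ?thesis by simp
  qed
  have slw: "(\<Sum>v\<in>K. legwt n a G v) = legwt n a (contract G Z) u"
  proof -
    have "(\<Sum>v\<in>K. legwt n a G v) = (\<Sum>v\<in>K. \<Sum>i\<in>{i\<in>{1..n}. leg G i = v}. a i)" unfolding legwt_def by simp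
    also have "\<dots> = (\<Sum>i\<in>{i\<in>{1..n}. leg G i \<in> K}. a i)" using finK by (intro fiber_sum) auto
    also have "{i\<in>{1..n}. leg G i \<in> K} = {i\<in>{1..n}. leg (contract G Z) i = u}" using legs K_def r_def by auto
    finally show ?thesis unfolding legwt_def by simp
  qed
  have pos: "(\<Sum>v\<in>K. 2 * real (wt G v) - 2 + real (val G v) + legwt n a G v) > 0"
    using st finK Kne K_def V_def by (intro sum_pos) auto
  have "(\<Sum>v\<in>K. 2 * real (wt G v) - 2 + real (val G v) + legwt n a G v)
        = 2 * (\<Sum>v\<in>K. real (wt G v)) - 2 * real (card K) + (\<Sum>v\<in>K. real (val G v)) + (\<Sum>v\<in>K. legwt n a G v)"
    by (simp add: sum.distrib sum_subtractf sum_distrib_left)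
  also have "\<dots> = 2 * real (wt (contract G Z) u) - 2 + real (val (contract G Z) u) + legwt n a (contract G Z) u"
    using wr sval slw by simp
  finally show ?thesis using pos by simp
qed

lemma contract_stable:
  assumes "stable_graph g n a G" "Z \<subseteq> edges G"
  shows "stable_graph g n a (contract G Z)"
proof -
  have wf: "wf_graph n G" and gg: "genus G = int g" using assms(1) unfolding stable_graph_def by blast+
  show ?thesis unfolding stable_graph_def
    using contract_wf[OF wf assms(2)] contract_genus[OF wf assms(2)] gg contract_stable_vertex[OF assms] by simp
qed

lemma stable_len[simp]: "stable_graph g n a (C\<lparr>len := l\<rparr>) = stable_graph g n a C"
  by (simp add: stable_graph_def wf_graph_def adjrel_def genus_def val_def legwt_def)

lemma comp_conn1:
  assumes wf: "wf_graph n G" and YE: "Y \<subseteq> edges G" and WE: "W \<subseteq> edges G - Y"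
    and "(v,u) \<in> (adjrel G (Y \<union> W))\<^sup>*" "v \<in> verts G"
  shows "(zrep G Y v, zrep G Y u) \<in> (adjrel (contract G Y) W)\<^sup>*"
  using assms(4) proof (induction rule: rtrancl_induct)
  case base then show ?case by simp
next
  case (step y z)
  then obtain e where e: "e \<in> Y \<union> W" "ends G e = (y,z) \<or> ends G e = (z,y)" by (auto simp: adjrel_iff)
  show ?case
  proof (cases "e \<in> Y")
    case True
    then have "(y,z) \<in> adjrel G Y" unfolding adjrel_iff using e by blast
    then have "zrep G Y y = zrep G Y z" by (intro zrep_eq) simp
    then show ?thesis using step.IH by simp
  next
    case False
    then have "e \<in> W" using e by blast
    then have "(zrep G Y y, zrep G Y z) \<in> adjrel (contract G Y) W"
      unfolding adjrel_iff using e by (intro bexI[of _ e]) auto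
    then show ?thesis by (rule rtrancl.rtrancl_into_rtrancl[OF step.IH])
  qed
qed

lemma comp_conn2:
  assumes wf: "wf_graph n G" and YE: "Y \<subseteq> edges G" and WE: "W \<subseteq> edges G - Y"
    and "(zrep G Y v, x) \<in> (adjrel (contract G Y) W)\<^sup>*" "v \<in> verts G"
  shows "\<exists>u\<in>verts G. x = zrep G Y u \<and> (v,u) \<in> (adjrel G (Y \<union> W))\<^sup>*"
  using assms(4) proof (induction rule: rtrancl_induct)
  case base then show ?case using assms(5) by blast
next
  case (step x x')
  then obtain u where u: "u \<in> verts G" "x = zrep G Y u" "(v,u) \<in> (adjrel G (Y \<union> W))\<^sup>*" by blast
  obtain e where e: "e \<in> W" "ends (contract G Y) e = (x,x') \<or> ends (contract G Y) e = (x',x)"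
    using step.hyps(2) by (auto simp: adjrel_iff)
  obtain a b where ab: "ends G e = (a,b)" by fastforce
  have eE: "e \<in> edges G" using e WE by blast
  have abV: "a \<in> verts G" "b \<in> verts G" using wf_ends[OF wf eE] ab by auto
  have finV: "finite (verts G)" using wf unfolding wf_graph_def by blast
  have adjab: "(a,b) \<in> adjrel G (Y \<union> W)" "(b,a) \<in> adjrel G (Y \<union> W)" unfolding adjrel_iff using e(1) ab by blast+
  have mono: "(p,q) \<in> (adjrel G Y)\<^sup>* \<Longrightarrow> (p,q) \<in> (adjrel G (Y \<union> W))\<^sup>*" for p q
    by (rule adjrel_rt_mono[of Y "Y \<union> W"]) auto
  from e(2) ab have "(x = zrep G Y a \<and> x' = zrep G Y b) \<or> (x = zrep G Y b \<and> x' = zrep G Y a)" by auto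
  then show ?case
  proof
    assume h: "x = zrep G Y a \<and> x' = zrep G Y b"
    then have "(u,a) \<in> (adjrel G Y)\<^sup>*" using zrep_eq_iff[OF finV u(1) abV(1)] u(2) by simp
    then have "(u,a) \<in> (adjrel G (Y \<union> W))\<^sup>*" by (rule mono)
    then have "(v,a) \<in> (adjrel G (Y \<union> W))\<^sup>*" by (rule rtrancl_trans[OF u(3)])
    then have "(v,b) \<in> (adjrel G (Y \<union> W))\<^sup>*" by (rule rtrancl.rtrancl_into_rtrancl[OF _ adjab(1)])
    then show ?thesis using h abV by blast
  next
    assume h: "x = zrep G Y b \<and> x' = zrep G Y a"
    then have "(u,b) \<in> (adjrel G Y)\<^sup>*" using zrep_eq_iff[OF finV u(1) abV(2)] u(2) by simp
    then have "(u,b) \<in> (adjrel G (Y \<union> W))\<^sup>*" by (rule mono)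
    then have "(v,b) \<in> (adjrel G (Y \<union> W))\<^sup>*" by (rule rtrancl_trans[OF u(3)])
    then have "(v,a) \<in> (adjrel G (Y \<union> W))\<^sup>*" by (rule rtrancl.rtrancl_into_rtrancl[OF _ adjab(2)])
    then show ?thesis using h abV by blast
  qed
qed

lemma comp_zrep:
  assumes wf: "wf_graph n G" and YE: "Y \<subseteq> edges G" and WE: "W \<subseteq> edges G - Y" and v: "v \<in> verts G"
  shows "zrep (contract G Y) W (zrep G Y v) = zrep G (Y \<union> W) v"
proof -
  have finV: "finite (verts G)" using wf unfolding wf_graph_def by blast
  define Kv where "Kv = {u\<in>verts G. (v,u) \<in> (adjrel G (Y \<union> W))\<^sup>*}"
  have mono: "(p,q) \<in> (adjrel G Y)\<^sup>* \<Longrightarrow> (p,q) \<in> (adjrel G (Y \<union> W))\<^sup>*" for p q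
    by (rule adjrel_rt_mono[of Y "Y \<union> W"]) auto
  have seteq: "{x\<in>verts (contract G Y). (zrep G Y v, x) \<in> (adjrel (contract G Y) W)\<^sup>*} = zrep G Y ` Kv"
  proof
    show "{x\<in>verts (contract G Y). (zrep G Y v, x) \<in> (adjrel (contract G Y) W)\<^sup>*} \<subseteq> zrep G Y ` Kv"
    proof
      fix x assume "x \<in> {x\<in>verts (contract G Y). (zrep G Y v, x) \<in> (adjrel (contract G Y) W)\<^sup>*}"
      then have "(zrep G Y v, x) \<in> (adjrel (contract G Y) W)\<^sup>*" by simp
      then obtain u where "u\<in>verts G" "x = zrep G Y u" "(v,u) \<in> (adjrel G (Y \<union> W))\<^sup>*"
        using comp_conn2[OF wf YE WE _ v] by blast
      then show "x \<in> zrep G Y ` Kv" unfolding Kv_def by blast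
    qed
  next
    show "zrep G Y ` Kv \<subseteq> {x\<in>verts (contract G Y). (zrep G Y v, x) \<in> (adjrel (contract G Y) W)\<^sup>*}"
    proof
      fix x assume "x \<in> zrep G Y ` Kv"
      then obtain u where u: "u \<in> verts G" "(v,u) \<in> (adjrel G (Y \<union> W))\<^sup>*" "x = zrep G Y u" unfolding Kv_def by blast
      have "(zrep G Y v, zrep G Y u) \<in> (adjrel (contract G Y) W)\<^sup>*" using comp_conn1[OF wf YE WE u(2) v] .
      then show "x \<in> {x\<in>verts (contract G Y). (zrep G Y v, x) \<in> (adjrel (contract G Y) W)\<^sup>*}" using u by simp
    qed
  qed
  have finK: "finite Kv" using finV Kv_def by simp
  have vK: "v \<in> Kv" using v Kv_def by simp
  have sub: "zrep G Y ` Kv \<subseteq> Kv"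
  proof
    fix x assume "x \<in> zrep G Y ` Kv"
    then obtain u where u: "u \<in> verts G" "(v,u) \<in> (adjrel G (Y \<union> W))\<^sup>*" "x = zrep G Y u" unfolding Kv_def by blast
    have "(u, zrep G Y u) \<in> (adjrel G (Y \<union> W))\<^sup>*" using zrep_props(2)[OF finV u(1)] by (rule mono)
    then have "(v, x) \<in> (adjrel G (Y \<union> W))\<^sup>*" using u(3) by (simp add: rtrancl_trans[OF u(2)])
    then show "x \<in> Kv" using zrep_props(1)[OF finV u(1)] u(3) Kv_def by simp
  qed
  have m1: "Min Kv \<le> Min (zrep G Y ` Kv)" using sub finK vK by (intro Min_antimono) auto
  have mK: "Min Kv \<in> Kv" using finK vK by (intro Min_in) auto
  then have mV: "Min Kv \<in> verts G" unfolding Kv_def by simp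
  have "zrep G Y (Min Kv) \<le> Min Kv" using zrep_le[OF finV mV] by simp
  moreover have "Min (zrep G Y ` Kv) \<le> zrep G Y (Min Kv)" using finK mK by (intro Min_le) auto
  ultimately have "Min (zrep G Y ` Kv) = Min Kv" using m1 by simp
  then show ?thesis unfolding zrep_def[of "contract G Y"] using seteq unfolding zrep_def Kv_def by simp
qed

lemma comp_wt:
  assumes wf: "wf_graph n G" and YE: "Y \<subseteq> edges G" and WE: "W \<subseteq> edges G - Y"
  shows "wt (contract (contract G Y) W) u = wt (contract G (Y \<union> W)) u"
proof -
  define G1 where "G1 = contract G Y"
  define r1 where "r1 = zrep G Y"
  define r2 where "r2 = zrep G (Y \<union> W)"
  define r' where "r' = zrep G1 W"
  define V where "V = verts G"
  have finV: "finite V" "finite (edges G)" using wf unfolding wf_graph_def V_def by auto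
  have finY: "finite Y" "finite W" using finV YE WE by (auto intro: finite_subset)
  have wf1: "wf_graph n G1" unfolding G1_def by (rule contract_wf[OF wf YE])
  have WE1: "W \<subseteq> edges G1" using WE G1_def by simp
  have YWE: "Y \<union> W \<subseteq> edges G" using YE WE by blast
  have rr: "r' (r1 v) = r2 v" if "v \<in> V" for v
    using comp_zrep[OF wf YE WE] that unfolding r'_def r1_def r2_def G1_def V_def by blast
  have ends: "\<forall>e\<in>edges G. fst (ends G e) \<in> V \<and> snd (ends G e) \<in> V" using wf_ends[OF wf] V_def by blast
  define K' where "K' = {y\<in>verts G1. r' y = u}"
  have V1: "verts G1 = r1 ` V" unfolding G1_def r1_def V_def by simp
  have finK': "finite K'" using finV V1 K'_def by simp
  have w1: "int (wt (contract G1 W) u) = int (\<Sum>y\<in>K'. wt G1 y)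
     + int (card {e\<in>W. r' (fst (ends G1 e)) = u}) + 1 - int (card K')"
    using contract_wt_int[OF wf1 WE1] unfolding r'_def K'_def .
  have wy: "int (wt G1 y) = int (\<Sum>v\<in>{v\<in>V. r1 v = y}. wt G v)
     + int (card {e\<in>Y. r1 (fst (ends G e)) = y}) + 1 - int (card {v\<in>V. r1 v = y})" for y
    using contract_wt_int[OF wf YE] unfolding G1_def r1_def V_def .
  have w2: "int (wt (contract G (Y \<union> W)) u) = int (\<Sum>v\<in>{v\<in>V. r2 v = u}. wt G v)
     + int (card {e\<in>Y \<union> W. r2 (fst (ends G e)) = u}) + 1 - int (card {v\<in>V. r2 v = u})"
    using contract_wt_int[OF wf YWE] unfolding r2_def V_def .
  have memK': "r1 v \<in> K' \<longleftrightarrow> r2 v = u" if "v \<in> V" for v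
    using that rr V1 K'_def by auto
  have s1: "(\<Sum>y\<in>K'. \<Sum>v\<in>{v\<in>V. r1 v = y}. wt G v) = (\<Sum>v\<in>{v\<in>V. r2 v = u}. wt G v)"
  proof -
    have "(\<Sum>y\<in>K'. \<Sum>v\<in>{v\<in>V. r1 v = y}. wt G v) = (\<Sum>v\<in>{v\<in>V. r1 v \<in> K'}. wt G v)"
      using finV finK' by (intro fiber_sum) auto
    also have "{v\<in>V. r1 v \<in> K'} = {v\<in>V. r2 v = u}" using memK' by auto
    finally show ?thesis .
  qed
  have s2: "(\<Sum>y\<in>K'. card {e\<in>Y. r1 (fst (ends G e)) = y}) = card {e\<in>Y. r2 (fst (ends G e)) = u}"
  proof -
    have "(\<Sum>y\<in>K'. card {e\<in>Y. r1 (fst (ends G e)) = y}) = card {e\<in>Y. r1 (fst (ends G e)) \<in> K'}"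
      using finY finK' by (intro fiber_card) auto
    also have "{e\<in>Y. r1 (fst (ends G e)) \<in> K'} = {e\<in>Y. r2 (fst (ends G e)) = u}"
      using memK' ends YE by auto
    finally show ?thesis .
  qed
  have s3: "(\<Sum>y\<in>K'. card {v\<in>V. r1 v = y}) = card {v\<in>V. r2 v = u}"
  proof -
    have "(\<Sum>y\<in>K'. card {v\<in>V. r1 v = y}) = card {v\<in>V. r1 v \<in> K'}"
      using finV finK' by (intro fiber_card) auto
    also have "{v\<in>V. r1 v \<in> K'} = {v\<in>V. r2 v = u}" using memK' by auto
    finally show ?thesis .
  qed
  have s4: "{e\<in>W. r' (fst (ends G1 e)) = u} = {e\<in>W. r2 (fst (ends G e)) = u}"
    using rr ends WE unfolding G1_def r1_def by auto
  have s5: "card {e\<in>Y \<union> W. r2 (fst (ends G e)) = u} = card {e\<in>Y. r2 (fst (ends G e)) = u} + card {e\<in>W. r2 (fst (ends G e)) = u}"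
  proof -
    have "{e\<in>Y \<union> W. r2 (fst (ends G e)) = u} = {e\<in>Y. r2 (fst (ends G e)) = u} \<union> {e\<in>W. r2 (fst (ends G e)) = u}" by auto
    moreover have "{e\<in>Y. r2 (fst (ends G e)) = u} \<inter> {e\<in>W. r2 (fst (ends G e)) = u} = {}" using WE by auto
    ultimately show ?thesis using finY by (simp add: card_Un_disjoint)
  qed
  have "int (\<Sum>y\<in>K'. wt G1 y) = (\<Sum>y\<in>K'. int (wt G1 y))" by simp
  also have "\<dots> = (\<Sum>y\<in>K'. int (\<Sum>v\<in>{v\<in>V. r1 v = y}. wt G v)
     + int (card {e\<in>Y. r1 (fst (ends G e)) = y}) + 1 - int (card {v\<in>V. r1 v = y}))" using wy by simp
  also have "\<dots> = int (\<Sum>y\<in>K'. \<Sum>v\<in>{v\<in>V. r1 v = y}. wt G v) + int (\<Sum>y\<in>K'. card {e\<in>Y. r1 (fst (ends G e)) = y})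
      + int (card K') - int (\<Sum>y\<in>K'. card {v\<in>V. r1 v = y})"
    by (simp add: sum.distrib sum_subtractf)
  finally have "int (\<Sum>y\<in>K'. wt G1 y) = int (\<Sum>v\<in>{v\<in>V. r2 v = u}. wt G v) + int (card {e\<in>Y. r2 (fst (ends G e)) = u})
      + int (card K') - int (card {v\<in>V. r2 v = u})" using s1 s2 s3 by simp
  then have "int (wt (contract G1 W) u) = int (wt (contract G (Y \<union> W)) u)"
    using w1 w2 s4 s5 by simp
  then show ?thesis unfolding G1_def by simp
qed

lemma iso_transfer:
  assumes "curve_iso n C X" "verts C = verts D" "edges C = edges D" "\<forall>v\<in>verts C. wt C v = wt D v"
    "\<forall>i\<in>{1..n}. leg C i = leg D i" "\<forall>e\<in>edges C. ends C e = ends D e \<and> len C e = len D e"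
  shows "curve_iso n D X"
proof -
  obtain f h where fh: "bij_betw f (verts C) (verts X)" "bij_betw h (edges C) (edges X)"
     "\<forall>v\<in>verts C. wt X (f v) = wt C v"
     "\<forall>i\<in>{1..n}. leg X i = f (leg C i)"
     "\<forall>e\<in>edges C. len X (h e) = len C e
          \<and> (ends X (h e) = map_prod f f (ends C e) \<or> ends X (h e) = prod.swap (map_prod f f (ends C e)))"
    using assms(1) unfolding curve_iso_def by blast
  show ?thesis unfolding curve_iso_def
    apply (rule exI[of _ f], rule exI[of _ h])
    using fh assms(2-6) by auto
qed

lemma iso_class_cong:
  assumes "verts C = verts D" "edges C = edges D" "\<forall>v\<in>verts C. wt C v = wt D v"
    "\<forall>i\<in>{1..n}. leg C i = leg D i" "\<forall>e\<in>edges C. ends C e = ends D e \<and> len C e = len D e"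
  shows "iso_class n C = iso_class n D"
  unfolding iso_class_def
proof (intro Collect_cong iffI)
  fix X assume "curve_iso n C X" then show "curve_iso n D X" using iso_transfer assms by blast
next
  fix X assume "curve_iso n D X" then show "curve_iso n C X" using iso_transfer[of n D X C] assms by auto
qed

lemma cone_map_contract:
  assumes wf: "wf_graph n G" and YE: "Y \<subseteq> edges G" and l0: "\<forall>e\<in>Y. l e = 0"
  shows "cone_map n (contract G Y) l = cone_map n G l"
proof -
  define W where "W = {e\<in>edges G - Y. l e = 0}"
  have WE: "W \<subseteq> edges G - Y" unfolding W_def by blast
  have Z1: "{e \<in> edges (contract G Y). l e = 0} = W" unfolding W_def by simp
  have Z2: "{e \<in> edges G. l e = 0} = Y \<union> W" unfolding W_def using YE l0 by auto
  have rr: "zrep (contract G Y) W (zrep G Y v) = zrep G (Y \<union> W) v" if "v \<in> verts G" for v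
    using comp_zrep[OF wf YE WE that] .
  have ends: "\<forall>e\<in>edges G. fst (ends G e) \<in> verts G \<and> snd (ends G e) \<in> verts G" using wf_ends[OF wf] by blast
  have legs: "\<forall>i\<in>{1..n}. leg G i \<in> verts G" using wf unfolding wf_graph_def by blast
  show ?thesis unfolding cone_map_def Z1 Z2
  proof (rule iso_class_cong)
    show "verts ((contract (contract G Y) W)\<lparr>len := l\<rparr>) = verts ((contract G (Y \<union> W))\<lparr>len := l\<rparr>)"
      using rr by (force simp: image_image)
    show "edges ((contract (contract G Y) W)\<lparr>len := l\<rparr>) = edges ((contract G (Y \<union> W))\<lparr>len := l\<rparr>)"
      by auto
    show "\<forall>v\<in>verts ((contract (contract G Y) W)\<lparr>len := l\<rparr>). wt ((contract (contract G Y) W)\<lparr>len := l\<rparr>) v = wt ((contract G (Y \<union> W))\<lparr>len := l\<rparr>) v"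
      using comp_wt[OF wf YE WE] by simp
    show "\<forall>i\<in>{1..n}. leg ((contract (contract G Y) W)\<lparr>len := l\<rparr>) i = leg ((contract G (Y \<union> W))\<lparr>len := l\<rparr>) i"
      using rr legs by simp
    show "\<forall>e\<in>edges ((contract (contract G Y) W)\<lparr>len := l\<rparr>). ends ((contract (contract G Y) W)\<lparr>len := l\<rparr>) e = ends ((contract G (Y \<union> W))\<lparr>len := l\<rparr>) e \<and> len ((contract (contract G Y) W)\<lparr>len := l\<rparr>) e = len ((contract G (Y \<union> W))\<lparr>len := l\<rparr>) e"
      using rr ends by (auto simp: map_prod_def split: prod.splits)
  qed
qed

lemma curve_iso_refl: "curve_iso n C C"
  unfolding curve_iso_def
  by (rule exI[of _ id], rule exI[of _ id]) (simp add: bij_betw_id map_prod.id)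

lemma curve_iso_trans:
  assumes "curve_iso n C D" "curve_iso n D X"
  shows "curve_iso n C X"
proof -
  obtain f h where fh: "bij_betw f (verts C) (verts D)" "bij_betw h (edges C) (edges D)"
     "\<forall>v\<in>verts C. wt D (f v) = wt C v"
     "\<forall>i\<in>{1..n}. leg D i = f (leg C i)"
     "\<forall>e\<in>edges C. len D (h e) = len C e
          \<and> (ends D (h e) = map_prod f f (ends C e) \<or> ends D (h e) = prod.swap (map_prod f f (ends C e)))"
    using assms(1) unfolding curve_iso_def by blast
  obtain f' h' where fh': "bij_betw f' (verts D) (verts X)" "bij_betw h' (edges D) (edges X)"
     "\<forall>v\<in>verts D. wt X (f' v) = wt D v"
     "\<forall>i\<in>{1..n}. leg X i = f' (leg D i)"
     "\<forall>e\<in>edges D. len X (h' e) = len D e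
          \<and> (ends X (h' e) = map_prod f' f' (ends D e) \<or> ends X (h' e) = prod.swap (map_prod f' f' (ends D e)))"
    using assms(2) unfolding curve_iso_def by blast
  have fD: "f v \<in> verts D" if "v \<in> verts C" for v using fh(1) that bij_betwE by blast
  have hD: "h e \<in> edges D" if "e \<in> edges C" for e using fh(2) that bij_betwE by blast
  show ?thesis unfolding curve_iso_def
  proof (rule exI[of _ "f' \<circ> f"], rule exI[of _ "h' \<circ> h"], intro conjI ballI)
    show "bij_betw (f' \<circ> f) (verts C) (verts X)" using fh(1) fh'(1) by (rule bij_betw_trans)
    show "bij_betw (h' \<circ> h) (edges C) (edges X)" using fh(2) fh'(2) by (rule bij_betw_trans)
    fix v assume "v \<in> verts C" then show "wt X ((f' \<circ> f) v) = wt C v" using fh(3) fh'(3) fD by simp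
  next
    fix i assume "i \<in> {1..n}" then show "leg X i = (f' \<circ> f) (leg C i)" using fh(4) fh'(4) by simp
  next
    fix e assume e: "e \<in> edges C"
    show "len X ((h' \<circ> h) e) = len C e" using fh(5) fh'(5) e hD by simp
    obtain a b where ab: "ends C e = (a,b)" by fastforce
    have "ends D (h e) = (f a, f b) \<or> ends D (h e) = (f b, f a)" using fh(5) e ab by auto
    then have "ends X (h' (h e)) = (f' (f a), f' (f b)) \<or> ends X (h' (h e)) = (f' (f b), f' (f a))"
      using fh'(5) hD[OF e] by auto
    then show "ends X ((h' \<circ> h) e) = map_prod (f' \<circ> f) (f' \<circ> f) (ends C e) \<or>
          ends X ((h' \<circ> h) e) = prod.swap (map_prod (f' \<circ> f) (f' \<circ> f) (ends C e))"
      using ab by auto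
  qed
qed

lemma iso_class_mem: "curve_iso n C D \<Longrightarrow> iso_class n D \<subseteq> iso_class n C"
  unfolding iso_class_def using curve_iso_trans by blast

lemma total_len_iso:
  assumes "curve_iso n C X"
  shows "total_len X = total_len C"
proof -
  obtain f h where fh: "bij_betw h (edges C) (edges X)"
     "\<forall>e\<in>edges C. len X (h e) = len C e"
    using assms unfolding curve_iso_def by blast
  have "total_len X = (\<Sum>e\<in>edges C. len X (h e))" unfolding total_len_def
    by (rule sym, rule sum.reindex_bij_betw[OF fh(1)])
  also have "\<dots> = total_len C" unfolding total_len_def using fh(2) by simp
  finally show ?thesis .
qed

lemma card_filter_sum: "finite S \<Longrightarrow> card {x\<in>S. P x} = (\<Sum>x\<in>S. if P x then 1 else 0)"
proof -
  assume "finite S"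
  moreover have "{x\<in>S. P x} = S \<inter> Collect P" by auto
  ultimately show ?thesis by (simp add: sum.If_cases)
qed

lemma stable_iso:
  assumes st: "stable_graph g n a C" and iso: "curve_iso n C X"
  shows "stable_graph g n a X"
proof -
  obtain f h where fh: "bij_betw f (verts C) (verts X)" "bij_betw h (edges C) (edges X)"
     "\<forall>v\<in>verts C. wt X (f v) = wt C v"
     "\<forall>i\<in>{1..n}. leg X i = f (leg C i)"
     "\<forall>e\<in>edges C. len X (h e) = len C e
          \<and> (ends X (h e) = map_prod f f (ends C e) \<or> ends X (h e) = prod.swap (map_prod f f (ends C e)))"
    using iso unfolding curve_iso_def by blast
  have wf: "wf_graph n C" and gen: "genus C = int g"
    and sv: "\<forall>v\<in>verts C. 2 * real (wt C v) - 2 + real (val C v) + legwt n a C v > 0"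
    using st unfolding stable_graph_def by blast+
  have finV: "finite (verts C)" "finite (edges C)" "verts C \<noteq> {}" using wf by (simp_all add: wf_graph_def)
  have legs: "\<forall>i\<in>{1..n}. leg C i \<in> verts C" using wf by (simp add: wf_graph_def)
  have conn: "\<forall>u\<in>verts C. \<forall>v\<in>verts C. (u, v) \<in> (adjrel C (edges C))\<^sup>*" using wf by (simp add: wf_graph_def)
  have inj: "inj_on f (verts C)" using fh(1) by (simp add: bij_betw_def)
  have VX: "verts X = f ` verts C" using fh(1) by (simp add: bij_betw_def)
  have EX: "edges X = h ` edges C" using fh(2) by (simp add: bij_betw_def)
  have finX: "finite (verts X)" "finite (edges X)" using finV VX EX by simp_all
  have endsX: "ends X (h e) = (f (fst (ends C e)), f (snd (ends C e))) \<or> ends X (h e) = (f (snd (ends C e)), f (fst (ends C e)))"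
    if "e \<in> edges C" for e using fh(5) that by (cases "ends C e") auto
  have adjX: "(f x, f y) \<in> adjrel X (edges X)" if xy: "(x,y) \<in> adjrel C (edges C)" for x y
  proof -
    obtain e where e: "e \<in> edges C" "ends C e = (x,y) \<or> ends C e = (y,x)" using xy by (auto simp: adjrel_iff)
    then have "ends X (h e) = (f x, f y) \<or> ends X (h e) = (f y, f x)" using endsX[OF e(1)] by auto
    moreover have "h e \<in> edges X" using EX e by auto
    ultimately show ?thesis unfolding adjrel_iff by blast
  qed
  have connX: "(f x, f y) \<in> (adjrel X (edges X))\<^sup>*" if "(x,y) \<in> (adjrel C (edges C))\<^sup>*" for x y
    using that proof (induction rule: rtrancl_induct)
    case base then show ?case by simp
  next
    case (step y z) show ?case by (rule rtrancl.rtrancl_into_rtrancl[OF step.IH adjX[OF step.hyps(2)]])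
  qed
  have wfX: "wf_graph n X" unfolding wf_graph_def
  proof (intro conjI ballI)
    show "finite (verts X)" "finite (edges X)" using finX by auto
    show "verts X \<noteq> {}" using finV VX by auto
  next
    fix e' assume "e' \<in> edges X"
    then obtain e where e: "e \<in> edges C" "e' = h e" using EX by auto
    have "fst (ends C e) \<in> verts C" "snd (ends C e) \<in> verts C" using wf_ends[OF wf e(1)] by auto
    then show "fst (ends X e') \<in> verts X" "snd (ends X e') \<in> verts X" using endsX[OF e(1)] e VX by auto
  next
    fix i assume "i \<in> {1..n}" then show "leg X i \<in> verts X" using fh(4) legs VX by auto
  next
    fix u v assume "u \<in> verts X" "v \<in> verts X"
    then obtain x y where "x \<in> verts C" "y \<in> verts C" "u = f x" "v = f y" using VX by auto
    then show "(u, v) \<in> (adjrel X (edges X))\<^sup>*" using connX conn by simp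
  qed
  have genX: "genus X = genus C"
  proof -
    have "card (verts X) = card (verts C)" using fh(1) by (simp add: bij_betw_same_card)
    moreover have "card (edges X) = card (edges C)" using fh(2) by (simp add: bij_betw_same_card)
    moreover have "(\<Sum>v\<in>verts X. wt X v) = (\<Sum>v\<in>verts C. wt C v)"
    proof -
      have "(\<Sum>v\<in>verts X. wt X v) = (\<Sum>v\<in>verts C. wt X (f v))" by (rule sym, rule sum.reindex_bij_betw[OF fh(1)])
      also have "\<dots> = (\<Sum>v\<in>verts C. wt C v)" using fh(3) by simp
      finally show ?thesis .
    qed
    ultimately show ?thesis unfolding genus_def by simp
  qed
  have valX: "val X (f v) = val C v" if v: "v \<in> verts C" for v
  proof -
    define ec where "ec (D::tcurve) e w = (if fst (ends D e) = w then 1 else 0) + (if snd (ends D e) = w then (1::nat) else 0)" for D e w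
    have vs: "val D w = (\<Sum>e\<in>edges D. ec D e w)" if "finite (edges D)" for D w
      unfolding val_def ec_def using that by (simp add: card_filter_sum sum.distrib)
    have "ec X (h e) (f v) = ec C e v" if e: "e \<in> edges C" for e
    proof -
      have ab: "fst (ends C e) \<in> verts C" "snd (ends C e) \<in> verts C" using wf_ends[OF wf e] by auto
      have i1: "f (fst (ends C e)) = f v \<longleftrightarrow> fst (ends C e) = v" using inj ab v unfolding inj_on_def by blast
      have i2: "f (snd (ends C e)) = f v \<longleftrightarrow> snd (ends C e) = v" using inj ab v unfolding inj_on_def by blast
      show ?thesis using endsX[OF e] i1 i2 unfolding ec_def by auto
    qed
    then have "(\<Sum>e\<in>edges C. ec X (h e) (f v)) = (\<Sum>e\<in>edges C. ec C e v)" by simp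
    moreover have "(\<Sum>e\<in>edges X. ec X e (f v)) = (\<Sum>e\<in>edges C. ec X (h e) (f v))"
      by (rule sym, rule sum.reindex_bij_betw[OF fh(2)])
    ultimately show ?thesis using vs finV finX by simp
  qed
  have lwX: "legwt n a X (f v) = legwt n a C v" if v: "v \<in> verts C" for v
  proof -
    have "{i\<in>{1..n}. leg X i = f v} = {i\<in>{1..n}. leg C i = v}"
    proof (rule Collect_cong)
      fix i show "(i \<in> {1..n} \<and> leg X i = f v) = (i \<in> {1..n} \<and> leg C i = v)"
        using fh(4) legs inj v unfolding inj_on_def by metis
    qed
    then show ?thesis unfolding legwt_def by simp
  qed
  show ?thesis unfolding stable_graph_def
  proof (intro conjI ballI)
    show "wf_graph n X" by (rule wfX)
    show "genus X = int g" using genX gen by simp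
    fix u assume "u \<in> verts X"
    then obtain v where v: "v \<in> verts C" "u = f v" using VX by auto
    then show "2 * real (wt X u) - 2 + real (val X u) + legwt n a X u > 0"
      using sv fh(3) valX lwX by simp
  qed
qed

definition XX :: "(tcurve \<Rightarrow> bool) \<Rightarrow> (tcurve \<Rightarrow> (nat \<Rightarrow> ereal) set) \<Rightarrow> nat \<Rightarrow> nat \<Rightarrow> (nat \<Rightarrow> real) \<Rightarrow> tcurve set topology" where
  "XX Q cn g n a = colim_top {iso_class n C | C. stable_graph g n a C \<and> Q C} {G. stable_graph g n a G} cn (cone_map n)"

definition PP :: "(tcurve \<Rightarrow> bool) \<Rightarrow> nat \<Rightarrow> nat \<Rightarrow> (nat \<Rightarrow> real) \<Rightarrow> tcurve set set" where
  "PP Q g n a = {iso_class n C | C. stable_graph g n a C \<and> Q C}"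

definition good :: "(tcurve \<Rightarrow> bool) \<Rightarrow> (tcurve \<Rightarrow> (nat \<Rightarrow> ereal) set) \<Rightarrow> bool" where
  "good Q cn \<longleftrightarrow> (\<forall>G l. l \<in> cn G \<longrightarrow> Q ((contract G {e\<in>edges G. l e = 0})\<lparr>len := l\<rparr>))
     \<and> (\<forall>G Y. Y \<subseteq> edges G \<longrightarrow> cn (contract G Y) = {l\<in>cn G. \<forall>e\<in>Y. l e = 0})
     \<and> (\<forall>G l e. l \<in> cn G \<longrightarrow> e \<in> edges G \<longrightarrow> 0 \<le> l e)"

lemma cm_in_P:
  assumes "good Q cn" "stable_graph g n a G" "l \<in> cn G"
  shows "cone_map n G l \<in> PP Q g n a"
proof -
  have "stable_graph g n a ((contract G {e\<in>edges G. l e = 0})\<lparr>len := l\<rparr>)"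
    using contract_stable[OF assms(2), of "{e\<in>edges G. l e = 0}"] by simp
  moreover have "\<forall>G l. l \<in> cn G \<longrightarrow> Q ((contract G {e\<in>edges G. l e = 0})\<lparr>len := l\<rparr>)"
    using assms(1) unfolding good_def by (rule conjunct1)
  then have "Q ((contract G {e\<in>edges G. l e = 0})\<lparr>len := l\<rparr>)" using assms(3) by blast
  ultimately show ?thesis unfolding PP_def cone_map_def by blast
qed

lemma XX_PP: "XX Q cn g n a = colim_top (PP Q g n a) {G. stable_graph g n a G} cn (cone_map n)"
  unfolding XX_def PP_def by simp

lemma topspace_XX:
  assumes "good Q cn"
  shows "topspace (XX Q cn g n a) = PP Q g n a"
  unfolding XX_PP by (rule topspace_colim) (use cm_in_P[OF assms] in auto)

lemma stable_mono:
  assumes "stable_graph g n a G" "le_wt n a b"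
  shows "stable_graph g n b G"
proof -
  have lw: "legwt n a G v \<le> legwt n b G v" for v
    unfolding legwt_def
  proof (rule sum_mono)
    fix i assume "i \<in> {i \<in> {1..n}. leg G i = v}"
    then show "a i \<le> b i" using assms(2) unfolding le_wt_def by simp
  qed
  have p: "wf_graph n G" "genus G = int g" "\<forall>v\<in>verts G. 2 * real (wt G v) - 2 + real (val G v) + legwt n a G v > 0"
    using assms(1) unfolding stable_graph_def by simp_all
  show ?thesis unfolding stable_graph_def
  proof (intro conjI ballI)
    fix v assume "v \<in> verts G"
    then have "2 * real (wt G v) - 2 + real (val G v) + legwt n a G v > 0" using p(3) by blast
    then show "2 * real (wt G v) - 2 + real (val G v) + legwt n b G v > 0" using lw[of v] by linarith
  qed (use p in simp_all)
qed

lemma PP_mono: "le_wt n a b \<Longrightarrow> PP Q g n a \<subseteq> PP Q g n b"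
  unfolding PP_def using stable_mono by blast

lemma P_stable:
  assumes "iso_class n X \<in> PP Q g n a"
  shows "stable_graph g n a X"
proof -
  obtain C where C: "iso_class n X = iso_class n C" "stable_graph g n a C" using assms unfolding PP_def by blast
  have "X \<in> iso_class n X" unfolding iso_class_def by (simp add: curve_iso_refl)
  then have "curve_iso n C X" using C(1) unfolding iso_class_def by simp
  then show ?thesis using stable_iso C(2) by blast
qed

lemma open_pos: "open {l::nat \<Rightarrow> ereal. 0 < l e}"
  by (rule open_Collect_less) (auto intro: continuous_on_product_coordinates)

lemma part1_XX:
  assumes gd: "good Q cn" and le: "le_wt n a b"
  shows "XX Q cn g n a = subtopology (XX Q cn g n b) (topspace (XX Q cn g n a))"
proof -
  let ?Pa = "PP Q g n a" and ?Pb = "PP Q g n b"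
  have ts: "topspace (XX Q cn g n a) = ?Pa" by (rule topspace_XX[OF gd])
  have PaPb: "?Pa \<subseteq> ?Pb" using PP_mono[OF le] .
  have cnc: "cn (contract G Y) = {l\<in>cn G. \<forall>e\<in>Y. l e = 0}" if "Y \<subseteq> edges G" for G Y
    using gd that unfolding good_def by blast
  have nonneg: "0 \<le> l e" if "l \<in> cn G" "e \<in> edges G" for G l e using gd that unfolding good_def by blast
  have oa: "openin (XX Q cn g n a) U \<longleftrightarrow> U \<subseteq> ?Pa \<and> (\<forall>G\<in>{G. stable_graph g n a G}. openin (top_of_set (cn G)) {l \<in> cn G. cone_map n G l \<in> U})" for U
    unfolding XX_PP openin_colim ..
  have ob: "openin (XX Q cn g n b) U \<longleftrightarrow> U \<subseteq> ?Pb \<and> (\<forall>G\<in>{G. stable_graph g n b G}. openin (top_of_set (cn G)) {l \<in> cn G. cone_map n G l \<in> U})" for U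
    unfolding XX_PP openin_colim ..
  show ?thesis unfolding ts
  proof (rule topology_eq[THEN iffD2], intro allI iffI)
    fix S assume "openin (subtopology (XX Q cn g n b) ?Pa) S"
    then obtain T where T: "openin (XX Q cn g n b) T" "S = T \<inter> ?Pa" unfolding openin_subtopology by blast
    show "openin (XX Q cn g n a) S" unfolding oa
    proof (intro conjI ballI)
      show "S \<subseteq> ?Pa" using T by blast
      fix G assume G: "G \<in> {G. stable_graph g n a G}"
      have "{l \<in> cn G. cone_map n G l \<in> S} = {l \<in> cn G. cone_map n G l \<in> T}"
        using T(2) cm_in_P[OF gd] G by auto
      moreover have "openin (top_of_set (cn G)) {l \<in> cn G. cone_map n G l \<in> T}"
        using T(1) stable_mono[OF _ le] G unfolding ob by blast
      ultimately show "openin (top_of_set (cn G)) {l \<in> cn G. cone_map n G l \<in> S}" by simp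
    qed
  next
    fix U assume U: "openin (XX Q cn g n a) U"
    define V where "V = U \<union> (?Pb - ?Pa)"
    have UPa: "U \<subseteq> ?Pa" using U oa by blast
    have "openin (XX Q cn g n b) V" unfolding ob
    proof (intro conjI ballI)
      show "V \<subseteq> ?Pb" using UPa PaPb V_def by blast
      fix G assume G: "G \<in> {G. stable_graph g n b G}"
      then have stb: "stable_graph g n b G" by simp
      have wf: "wf_graph n G" using stb unfolding stable_graph_def by blast
      have finE: "finite (edges G)" using wf unfolding wf_graph_def by blast
      show "openin (top_of_set (cn G)) {l \<in> cn G. cone_map n G l \<in> V}"
      proof (subst openin_subopen, intro ballI)
        fix l0 assume l0: "l0 \<in> {l \<in> cn G. cone_map n G l \<in> V}"
        define Z0 where "Z0 = {e\<in>edges G. l0 e = 0}"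
        define Fam where "Fam = {Y. Y \<subseteq> Z0 \<and> stable_graph g n a (contract G Y)}"
        have finF: "finite Fam" unfolding Fam_def Z0_def using finE
          by (rule finite_subset[rotated, OF finite_Pow_iff[THEN iffD2]]) auto
        define pre where "pre Y = {l \<in> cn (contract G Y). cone_map n (contract G Y) l \<in> U}" for Y
        have "\<forall>Y\<in>Fam. \<exists>Op. open Op \<and> pre Y = cn (contract G Y) \<inter> Op"
        proof
          fix Y assume "Y \<in> Fam"
          then have "stable_graph g n a (contract G Y)" unfolding Fam_def by blast
          then have "openin (top_of_set (cn (contract G Y))) (pre Y)" using U unfolding oa pre_def by blast
          then show "\<exists>Op. open Op \<and> pre Y = cn (contract G Y) \<inter> Op" by (simp add: openin_open)
        qed
        then obtain Op where O: "\<forall>Y\<in>Fam. open (Op Y) \<and> pre Y = cn (contract G Y) \<inter> Op Y" by metis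
        define N where "N = (\<Inter>e\<in>edges G - Z0. {l::nat \<Rightarrow> ereal. 0 < l e})"
        have oN: "open N" unfolding N_def using finE open_pos by (intro open_INT) auto
        have oO: "open (\<Inter>Y\<in>Fam. Op Y)" using finF O by (intro open_INT) auto
        define T where "T = cn G \<inter> (N \<inter> (\<Inter>Y\<in>Fam. Op Y))"
        show "\<exists>T. openin (top_of_set (cn G)) T \<and> l0 \<in> T \<and> T \<subseteq> {l \<in> cn G. cone_map n G l \<in> V}"
        proof (intro exI conjI)
          show "openin (top_of_set (cn G)) T" unfolding T_def using oN oO
            by (intro openin_open_Int) auto
          have l0c: "l0 \<in> cn G" using l0 by simp
          have "l0 \<in> N" unfolding N_def Z0_def
          proof
            fix e assume "e \<in> edges G - {e \<in> edges G. l0 e = 0}"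
            then show "l0 \<in> {l. 0 < l e}" using nonneg[OF l0c] by (simp add: order_less_le)
          qed
          moreover have "l0 \<in> Op Y" if Y: "Y \<in> Fam" for Y
          proof -
            have YZ: "Y \<subseteq> Z0" and sY: "stable_graph g n a (contract G Y)" using Y Fam_def by auto
            have YE: "Y \<subseteq> edges G" using YZ Z0_def by auto
            have l0Y: "l0 \<in> cn (contract G Y)" using cnc[OF YE] l0c YZ Z0_def by auto
            have eq: "cone_map n (contract G Y) l0 = cone_map n G l0"
              using cone_map_contract[OF wf YE] YZ Z0_def by auto
            have "cone_map n (contract G Y) l0 \<in> ?Pa" using cm_in_P[OF gd sY l0Y] .
            then have "cone_map n (contract G Y) l0 \<in> U" using eq l0 V_def by auto
            then have "l0 \<in> pre Y" using l0Y pre_def by simp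
            then show ?thesis using O Y by blast
          qed
          ultimately show "l0 \<in> T" unfolding T_def using l0c by blast
        next
          show "T \<subseteq> {l \<in> cn G. cone_map n G l \<in> V}"
          proof
            fix l assume lT: "l \<in> T"
            then have lc: "l \<in> cn G" and lN: "l \<in> N" and lO: "\<forall>Y\<in>Fam. l \<in> Op Y" unfolding T_def by auto
            have pb: "cone_map n G l \<in> ?Pb" using cm_in_P[OF gd stb lc] .
            show "l \<in> {l \<in> cn G. cone_map n G l \<in> V}"
            proof (cases "cone_map n G l \<in> ?Pa")
              case False then show ?thesis using pb lc V_def by blast
            next
              case True
              define Y where "Y = {e\<in>edges G. l e = 0}"
              have YE: "Y \<subseteq> edges G" unfolding Y_def by blast
              have YZ: "Y \<subseteq> Z0"
              proof
                fix e assume e: "e \<in> Y"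
                show "e \<in> Z0"
                proof (rule ccontr)
                  assume nz: "e \<notin> Z0"
                  have "e \<in> edges G - Z0" using nz e unfolding Y_def by blast
                  then have "0 < l e" using lN unfolding N_def by blast
                  then show False using e Y_def by simp
                qed
              qed
              have "stable_graph g n a ((contract G Y)\<lparr>len := l\<rparr>)"
                using P_stable True unfolding cone_map_def Y_def by blast
              then have sY: "stable_graph g n a (contract G Y)" by simp
              then have YF: "Y \<in> Fam" using YZ Fam_def by blast
              have lY: "l \<in> cn (contract G Y)" using cnc[OF YE] lc Y_def by auto
              have "l \<in> pre Y" using O YF lO lY by blast
              then have "cone_map n (contract G Y) l \<in> U" unfolding pre_def by blast
              moreover have "cone_map n (contract G Y) l = cone_map n G l"
                using cone_map_contract[OF wf YE] Y_def by auto
              ultimately show ?thesis using lc V_def by auto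
            qed
          qed
        qed
      qed
    qed
    moreover have "U = V \<inter> ?Pa" using UPa V_def by blast
    ultimately show "openin (subtopology (XX Q cn g n b) ?Pa) U" unfolding openin_subtopology by blast
  qed
qed

lemma relabel_simps[simp]:
  "verts (relabel \<sigma> C) = verts C" "edges (relabel \<sigma> C) = edges C" "ends (relabel \<sigma> C) = ends C"
  "wt (relabel \<sigma> C) = wt C" "len (relabel \<sigma> C) = len C" "leg (relabel \<sigma> C) i = leg C (\<sigma> i)"
  by (simp_all add: relabel_def)

lemma zrep_leg[simp]: "zrep (C\<lparr>leg := x\<rparr>) Z = zrep C Z"
  by (simp add: zrep_def adjrel_def fun_eq_iff)

lemma zrep_relabel[simp]: "zrep (relabel \<sigma> C) Z = zrep C Z"
  by (simp add: relabel_def)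

lemma contract_relabel: "contract (relabel \<sigma> G) Z = relabel \<sigma> (contract G Z)"
  by (simp add: contract_def relabel_def)

lemma relabel_len: "relabel \<sigma> (C\<lparr>len := l\<rparr>) = (relabel \<sigma> C)\<lparr>len := l\<rparr>"
  by (simp add: relabel_def)

lemma iso_relabel:
  assumes "curve_iso n C D" "\<sigma> permutes {1..n}"
  shows "curve_iso n (relabel \<sigma> C) (relabel \<sigma> D)"
proof -
  obtain f h where fh: "bij_betw f (verts C) (verts D)" "bij_betw h (edges C) (edges D)"
     "\<forall>v\<in>verts C. wt D (f v) = wt C v"
     "\<forall>i\<in>{1..n}. leg D i = f (leg C i)"
     "\<forall>e\<in>edges C. len D (h e) = len C e
          \<and> (ends D (h e) = map_prod f f (ends C e) \<or> ends D (h e) = prod.swap (map_prod f f (ends C e)))"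
    using assms(1) unfolding curve_iso_def by blast
  have "\<forall>i\<in>{1..n}. leg D (\<sigma> i) = f (leg C (\<sigma> i))"
    using fh(4) permutes_in_image[OF assms(2)] by blast
  note l = this
  show ?thesis unfolding curve_iso_def
    apply (rule exI[of _ f], rule exI[of _ h])
    using fh l by simp
qed

lemma relabel_map_iso:
  assumes "\<sigma> permutes {1..n}"
  shows "relabel_map n \<sigma> (iso_class n C) = iso_class n (relabel \<sigma> C)"
proof
  show "relabel_map n \<sigma> (iso_class n C) \<subseteq> iso_class n (relabel \<sigma> C)"
  proof
    fix D assume "D \<in> relabel_map n \<sigma> (iso_class n C)"
    then obtain C' where "curve_iso n C C'" "curve_iso n (relabel \<sigma> C') D"
      unfolding relabel_map_def iso_class_def by blast
    then show "D \<in> iso_class n (relabel \<sigma> C)" unfolding iso_class_def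
      using iso_relabel[OF _ assms] curve_iso_trans by blast
  qed
next
  show "iso_class n (relabel \<sigma> C) \<subseteq> relabel_map n \<sigma> (iso_class n C)"
    unfolding relabel_map_def iso_class_def using curve_iso_refl by blast
qed

lemma relabel_inv1:
  assumes "\<sigma> permutes {1..n}"
  shows "relabel (inv \<sigma>) (relabel \<sigma> C) = C"
proof -
  have "(\<lambda>i. leg C (\<sigma> (inv \<sigma> i))) = leg C" using permutes_inverses(1)[OF assms] by simp
  then show ?thesis unfolding relabel_def by simp
qed

lemma relabel_inv2:
  assumes "\<sigma> permutes {1..n}"
  shows "relabel \<sigma> (relabel (inv \<sigma>) C) = C"
proof -
  have "(\<lambda>i. leg C (inv \<sigma> (\<sigma> i))) = leg C" using permutes_inverses(2)[OF assms] by simp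
  then show ?thesis unfolding relabel_def by simp
qed

lemma stable_relabel:
  assumes perm: "\<sigma> permutes {1..n}" and ab: "\<forall>i\<in>{1..n}. b i = a (\<sigma> i)" and st: "stable_graph g n a C"
  shows "stable_graph g n b (relabel \<sigma> C)"
proof -
  have inS: "\<sigma> i \<in> {1..n} \<longleftrightarrow> i \<in> {1..n}" for i using permutes_in_image[OF perm] .
  have lw: "legwt n b (relabel \<sigma> C) v = legwt n a C v" for v
  proof -
    have inj: "inj_on \<sigma> {i\<in>{1..n}. leg C (\<sigma> i) = v}" using permutes_inj_on[OF perm] by (rule inj_on_subset) auto
    have img: "\<sigma> ` {i\<in>{1..n}. leg C (\<sigma> i) = v} = {j\<in>{1..n}. leg C j = v}"
    proof
      show "\<sigma> ` {i\<in>{1..n}. leg C (\<sigma> i) = v} \<subseteq> {j\<in>{1..n}. leg C j = v}" using inS by auto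
      show "{j\<in>{1..n}. leg C j = v} \<subseteq> \<sigma> ` {i\<in>{1..n}. leg C (\<sigma> i) = v}"
      proof
        fix j assume j: "j \<in> {j\<in>{1..n}. leg C j = v}"
        have "inv \<sigma> j \<in> {i\<in>{1..n}. leg C (\<sigma> i) = v}"
          using j permutes_inverses(1)[OF perm] inS[of "inv \<sigma> j"] by auto
        moreover have "j = \<sigma> (inv \<sigma> j)" using permutes_inverses(1)[OF perm] by simp
        ultimately show "j \<in> \<sigma> ` {i\<in>{1..n}. leg C (\<sigma> i) = v}" by blast
      qed
    qed
    have "legwt n b (relabel \<sigma> C) v = (\<Sum>i\<in>{i\<in>{1..n}. leg C (\<sigma> i) = v}. a (\<sigma> i))"
      unfolding legwt_def using ab by simp
    also have "\<dots> = (\<Sum>j\<in>\<sigma> ` {i\<in>{1..n}. leg C (\<sigma> i) = v}. a j)" by (subst sum.reindex[OF inj]) (simp add: comp_def)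
    also have "\<dots> = legwt n a C v" unfolding img legwt_def ..
    finally show ?thesis .
  qed
  have legeq: "(\<forall>i\<in>{1..n}. leg C (\<sigma> i) \<in> verts C) \<longleftrightarrow> (\<forall>i\<in>{1..n}. leg C i \<in> verts C)"
  proof
    assume h: "\<forall>i\<in>{1..n}. leg C (\<sigma> i) \<in> verts C"
    show "\<forall>i\<in>{1..n}. leg C i \<in> verts C"
    proof
      fix i assume i: "i \<in> {1..n}"
      then have "inv \<sigma> i \<in> {1..n}" using inS[of "inv \<sigma> i"] permutes_inverses(1)[OF perm] by simp
      then have "leg C (\<sigma> (inv \<sigma> i)) \<in> verts C" using h by blast
      then show "leg C i \<in> verts C" using permutes_inverses(1)[OF perm] by simp
    qed
  next
    assume h: "\<forall>i\<in>{1..n}. leg C i \<in> verts C"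
    show "\<forall>i\<in>{1..n}. leg C (\<sigma> i) \<in> verts C" using h inS by blast
  qed
  have wfeq: "wf_graph n (relabel \<sigma> C) = wf_graph n C"
    unfolding wf_graph_def adjrel_def using legeq by simp
  have "genus (relabel \<sigma> C) = genus C" "val (relabel \<sigma> C) = val C"
    by (simp_all add: genus_def val_def fun_eq_iff)
  then show ?thesis using st wfeq lw unfolding stable_graph_def by simp
qed

lemma relabel_map_PP:
  assumes perm: "\<sigma> permutes {1..n}" and ab: "\<forall>i\<in>{1..n}. b i = a (\<sigma> i)"
    and Qr: "\<forall>\<sigma> C. Q (relabel \<sigma> C) = Q C" and p: "p \<in> PP Q g n a"
  shows "relabel_map n \<sigma> p \<in> PP Q g n b"
proof -
  obtain C where C: "p = iso_class n C" "stable_graph g n a C" "Q C" using p unfolding PP_def by blast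
  have "relabel_map n \<sigma> p = iso_class n (relabel \<sigma> C)" using relabel_map_iso[OF perm] C by simp
  moreover have "stable_graph g n b (relabel \<sigma> C)" using stable_relabel[OF perm ab C(2)] .
  moreover have "Q (relabel \<sigma> C)" using Qr C by simp
  ultimately show ?thesis unfolding PP_def by blast
qed

lemma relabel_map_inv:
  assumes perm: "\<sigma> permutes {1..n}" and p: "p \<in> PP Q g n a"
  shows "relabel_map n (inv \<sigma>) (relabel_map n \<sigma> p) = p"
proof -
  obtain C where C: "p = iso_class n C" using p unfolding PP_def by blast
  show ?thesis using C relabel_map_iso[OF perm] relabel_map_iso[OF permutes_inv[OF perm]] relabel_inv1[OF perm] by simp
qed

lemma cone_map_relabel:
  assumes perm: "\<sigma> permutes {1..n}"
  shows "cone_map n (relabel \<sigma> G) l = relabel_map n \<sigma> (cone_map n G l)"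
  unfolding cone_map_def using relabel_map_iso[OF perm] by (simp add: contract_relabel relabel_len)

lemma cont_relabel:
  assumes gd: "good Q cn" and perm: "\<sigma> permutes {1..n}" and ab: "\<forall>i\<in>{1..n}. b i = a (\<sigma> i)"
    and Qr: "\<forall>\<sigma> C. Q (relabel \<sigma> C) = Q C" and cr: "\<forall>\<sigma> G. cn (relabel \<sigma> G) = cn G"
  shows "continuous_map (XX Q cn g n a) (XX Q cn g n b) (relabel_map n \<sigma>)"
  unfolding continuous_map_def
proof (intro conjI allI impI)
  show "relabel_map n \<sigma> \<in> topspace (XX Q cn g n a) \<rightarrow> topspace (XX Q cn g n b)"
    unfolding topspace_XX[OF gd] using relabel_map_PP[OF perm ab Qr] by blast
next
  fix U assume U: "openin (XX Q cn g n b) U"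
  have "openin (XX Q cn g n a) {x \<in> PP Q g n a. relabel_map n \<sigma> x \<in> U}"
    unfolding XX_PP openin_colim
  proof (intro conjI ballI)
    show "{x \<in> PP Q g n a. relabel_map n \<sigma> x \<in> U} \<subseteq> PP Q g n a" by blast
    fix G assume G: "G \<in> {G. stable_graph g n a G}"
    have sG: "stable_graph g n b (relabel \<sigma> G)" using stable_relabel[OF perm ab] G by simp
    have "{l \<in> cn G. cone_map n G l \<in> {x \<in> PP Q g n a. relabel_map n \<sigma> x \<in> U}}
        = {l \<in> cn (relabel \<sigma> G). cone_map n (relabel \<sigma> G) l \<in> U}"
      using cm_in_P[OF gd] G cr cone_map_relabel[OF perm] by auto
    moreover have "openin (top_of_set (cn (relabel \<sigma> G))) {l \<in> cn (relabel \<sigma> G). cone_map n (relabel \<sigma> G) l \<in> U}"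
      using U sG unfolding XX_PP openin_colim by blast
    ultimately show "openin (top_of_set (cn G)) {l \<in> cn G. cone_map n G l \<in> {x \<in> PP Q g n a. relabel_map n \<sigma> x \<in> U}}"
      using cr by simp
  qed
  then show "openin (XX Q cn g n a) {x \<in> topspace (XX Q cn g n a). relabel_map n \<sigma> x \<in> U}"
    unfolding topspace_XX[OF gd] .
qed

lemma homeo_relabel:
  assumes gd: "good Q cn" and perm: "\<sigma> permutes {1..n}" and ab: "\<forall>i\<in>{1..n}. b i = a (\<sigma> i)"
    and Qr: "\<forall>\<sigma> C. Q (relabel \<sigma> C) = Q C" and cr: "\<forall>\<sigma> G. cn (relabel \<sigma> G) = cn G"
  shows "homeomorphic_map (XX Q cn g n a) (XX Q cn g n b) (relabel_map n \<sigma>)"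
proof -
  have perm': "inv \<sigma> permutes {1..n}" using permutes_inv[OF perm] .
  have ba: "\<forall>i\<in>{1..n}. a i = b (inv \<sigma> i)"
    using ab permutes_inverses(1)[OF perm] permutes_in_image[OF perm'] by metis
  show ?thesis unfolding homeomorphic_map_maps homeomorphic_maps_def
  proof (intro exI conjI ballI)
    show "continuous_map (XX Q cn g n a) (XX Q cn g n b) (relabel_map n \<sigma>)" by (rule cont_relabel[OF gd perm ab Qr cr])
    show "continuous_map (XX Q cn g n b) (XX Q cn g n a) (relabel_map n (inv \<sigma>))" by (rule cont_relabel[OF gd perm' ba Qr cr])
    fix x assume "x \<in> topspace (XX Q cn g n a)"
    then show "relabel_map n (inv \<sigma>) (relabel_map n \<sigma> x) = x" using relabel_map_inv[OF perm] topspace_XX[OF gd] by simp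
  next
    fix y assume y: "y \<in> topspace (XX Q cn g n b)"
    have "relabel_map n (inv (inv \<sigma>)) (relabel_map n (inv \<sigma>) y) = y"
      using relabel_map_inv[OF perm'] topspace_XX[OF gd] y by simp
    moreover have "inv (inv \<sigma>) = \<sigma>" using perm by (simp add: permutes_inv_inv)
    ultimately show "relabel_map n \<sigma> (relabel_map n (inv \<sigma>) y) = y" by simp
  qed
qed

lemma chamber_sums:
  assumes "connected_component (wregion g n - walls n) a b" "S \<subseteq> {1..n}" "2 \<le> card S"
  shows "1 < (\<Sum>i\<in>S. a i) \<longleftrightarrow> 1 < (\<Sum>i\<in>S. b i)"
proof -
  obtain T where T: "connected T" "T \<subseteq> wregion g n - walls n" "a \<in> T" "b \<in> T"
    using assms(1) unfolding connected_component_def by blast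
  define \<phi> where "\<phi> c = (\<Sum>i\<in>S. c i)" for c :: "nat \<Rightarrow> real"
  have cont: "continuous_on T \<phi>" unfolding \<phi>_def
    by (intro continuous_on_sum continuous_on_subset[OF continuous_on_product_coordinates]) auto
  have conn: "connected (\<phi> ` T)" using connected_continuous_image[OF cont T(1)] .
  have nw: "\<phi> c \<noteq> 1" if "c \<in> T" for c
  proof
    assume "\<phi> c = 1"
    then have "c \<in> walls n" unfolding walls_def \<phi>_def using assms(2,3) by blast
    then show False using T(2) that by blast
  qed
  have key: "1 < \<phi> y" if "1 < \<phi> x" "x \<in> T" "y \<in> T" for x y
  proof (rule ccontr)
    assume "\<not> 1 < \<phi> y"
    then have "\<phi> y \<le> 1" by simp
    have i: "\<forall>u\<in>\<phi> ` T. \<forall>w\<in>\<phi> ` T. \<forall>z\<ge>u. z \<le> w \<longrightarrow> z \<in> \<phi> ` T"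
      using conn connected_iff_interval by blast
    have py: "\<phi> y \<in> \<phi> ` T" and px: "\<phi> x \<in> \<phi> ` T" using that by auto
    have "(1::real) \<in> \<phi> ` T" using i[rule_format, OF py px, of 1] \<open>\<phi> y \<le> 1\<close> that(1) by simp
    then obtain c where "c \<in> T" "\<phi> c = 1" by (auto elim!: imageE)
    then show False using nw by blast
  qed
  show ?thesis using key T(3,4) unfolding \<phi>_def by blast
qed

lemma val0_genus:
  assumes wf: "wf_graph n C" and v: "v \<in> verts C" and z: "val C v = 0"
  shows "genus C = int (wt C v)"
proof -
  have finE: "finite (edges C)" using wf unfolding wf_graph_def by blast
  have noe: "\<forall>e\<in>edges C. fst (ends C e) \<noteq> v \<and> snd (ends C e) \<noteq> v"
  proof -
    have "card {e\<in>edges C. fst (ends C e) = v} = 0" "card {e\<in>edges C. snd (ends C e) = v} = 0"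
      using z unfolding val_def by simp_all
    then have "{e\<in>edges C. fst (ends C e) = v} = {}" "{e\<in>edges C. snd (ends C e) = v} = {}"
      using finE by simp_all
    then show ?thesis by blast
  qed
  have conn: "\<forall>u\<in>verts C. \<forall>w\<in>verts C. (u, w) \<in> (adjrel C (edges C))\<^sup>*" using wf unfolding wf_graph_def by blast
  have V: "verts C = {v}"
  proof
    show "verts C \<subseteq> {v}"
    proof
      fix u assume u: "u \<in> verts C"
      have "(u,v) \<in> (adjrel C (edges C))\<^sup>*" using conn u v by blast
      then show "u \<in> {v}"
      proof (cases rule: rtranclE)
        case base then show ?thesis by simp
      next
        case (step y)
        then obtain e where "e \<in> edges C" "ends C e = (y,v) \<or> ends C e = (v,y)" by (auto simp: adjrel_iff)
        then show ?thesis using noe by auto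
      qed
    qed
    show "{v} \<subseteq> verts C" using v by simp
  qed
  have E: "edges C = {}"
  proof (rule ccontr)
    assume "edges C \<noteq> {}"
    then obtain e where e: "e \<in> edges C" by blast
    then have "fst (ends C e) \<in> verts C" using wf_ends[OF wf e] by simp
    then show False using V noe e by simp
  qed
  show ?thesis unfolding genus_def using V E by simp
qed

lemma stable_transfer:
  assumes g1: "g \<ge> 1" and apos: "\<forall>i\<in>{1..n}. 0 < a i \<and> a i \<le> 1" and bpos: "\<forall>i\<in>{1..n}. 0 < b i \<and> b i \<le> 1"
    and sums: "\<forall>S. S \<subseteq> {1..n} \<longrightarrow> 2 \<le> card S \<longrightarrow> (1 < (\<Sum>i\<in>S. a i) \<longleftrightarrow> 1 < (\<Sum>i\<in>S. b i))"
    and st: "stable_graph g n a G"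
  shows "stable_graph g n b G"
proof -
  have wf: "wf_graph n G" and gen: "genus G = int g"
    and sv: "\<forall>v\<in>verts G. 2 * real (wt G v) - 2 + real (val G v) + legwt n a G v > 0"
    using st unfolding stable_graph_def by simp_all
  have "2 * real (wt G v) - 2 + real (val G v) + legwt n b G v > 0" if v: "v \<in> verts G" for v
  proof -
    define S where "S = {i\<in>{1..n}. leg G i = v}"
    have finS: "finite S" unfolding S_def by simp
    have SS: "S \<subseteq> {1..n}" unfolding S_def by blast
    have A: "legwt n a G v = (\<Sum>i\<in>S. a i)" and B: "legwt n b G v = (\<Sum>i\<in>S. b i)" unfolding legwt_def S_def by simp_all
    have B0: "(\<Sum>i\<in>S. b i) \<ge> 0" using bpos SS by (intro sum_nonneg) (auto simp: subset_iff less_imp_le)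
    have A0: "(\<Sum>i\<in>S. b i) > 0" if "(\<Sum>i\<in>S. a i) > 0"
    proof -
      have "S \<noteq> {}" using that by auto
      then show ?thesis using bpos SS finS by (intro sum_pos) auto
    qed
    have A1: "(\<Sum>i\<in>S. b i) > 1" if h: "(\<Sum>i\<in>S. a i) > 1"
    proof (cases "2 \<le> card S")
      case True then show ?thesis using sums SS h by blast
    next
      case False
      then have "card S = 0 \<or> card S = 1" by arith
      then have "(\<Sum>i\<in>S. a i) \<le> 1"
      proof
        assume "card S = 0" then have "S = {}" using finS by simp
        then show ?thesis by simp
      next
        assume "card S = 1" then obtain i where "S = {i}" by (rule card_1_singletonE)
        then show ?thesis using apos SS by simp
      qed
      then show ?thesis using h by simp
    qed
    have nz: "\<not> (wt G v = 0 \<and> val G v = 0)"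
    proof
      assume h: "wt G v = 0 \<and> val G v = 0"
      then have "genus G = 0" using val0_genus[OF wf v] by simp
      then show False using gen g1 by simp
    qed
    have hv: "2 * real (wt G v) - 2 + real (val G v) + (\<Sum>i\<in>S. a i) > 0" using sv v unfolding A[symmetric] by blast
    show ?thesis
    proof (cases "wt G v \<ge> 2")
      case True then show ?thesis using B B0 by simp
    next
      case False
      then have "wt G v = 0 \<or> wt G v = 1" by arith
      then show ?thesis
      proof
        assume w1: "wt G v = 1"
        show ?thesis
        proof (cases "val G v \<ge> 1")
          case True then show ?thesis using B w1 B0 by simp
        next
          case False then have "val G v = 0" by simp
          then show ?thesis using B w1 hv A0 by simp
        qed
      next
        assume w0: "wt G v = 0"
        have "val G v \<ge> 3 \<or> val G v = 2 \<or> val G v = 1" using nz w0 by arith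
        then show ?thesis
        proof (elim disjE)
          assume "val G v \<ge> 3" then show ?thesis using B w0 B0 by simp
        next
          assume k: "val G v = 2" then show ?thesis using B w0 hv A0 by simp
        next
          assume k: "val G v = 1" then show ?thesis using B w0 hv A1 by simp
        qed
      qed
    qed
  qed
  then show ?thesis unfolding stable_graph_def using wf gen by simp
qed

lemma chamber_stable_eq:
  assumes g1: "g \<ge> 1" and cc: "connected_component (wregion g n - walls n) a b"
  shows "stable_graph g n a = stable_graph g n b"
proof -
  have ab: "a \<in> wregion g n" "b \<in> wregion g n" using connected_component_in[OF cc] by auto
  have apos: "\<forall>i\<in>{1..n}. 0 < a i \<and> a i \<le> 1" and bpos: "\<forall>i\<in>{1..n}. 0 < b i \<and> b i \<le> 1"
    using ab unfolding wregion_def by auto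
  have cc': "connected_component (wregion g n - walls n) b a" using cc connected_component_sym by metis
  have s1: "\<forall>S. S \<subseteq> {1..n} \<longrightarrow> 2 \<le> card S \<longrightarrow> (1 < (\<Sum>i\<in>S. a i) \<longleftrightarrow> 1 < (\<Sum>i\<in>S. b i))"
    using chamber_sums[OF cc] by blast
  have s2: "\<forall>S. S \<subseteq> {1..n} \<longrightarrow> 2 \<le> card S \<longrightarrow> (1 < (\<Sum>i\<in>S. b i) \<longleftrightarrow> 1 < (\<Sum>i\<in>S. a i))"
    using chamber_sums[OF cc'] by blast
  show ?thesis
  proof (rule ext, rule iffI)
    fix G assume "stable_graph g n a G" then show "stable_graph g n b G" using stable_transfer[OF g1 apos bpos s1] by blast
  next
    fix G assume "stable_graph g n b G" then show "stable_graph g n a G" using stable_transfer[OF g1 bpos apos s2] by blast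
  qed
qed

definition Qm :: "tcurve \<Rightarrow> bool" where "Qm C \<longleftrightarrow> (\<forall>e\<in>edges C. 0 < len C e \<and> len C e < \<infinity>)"
definition Qb :: "tcurve \<Rightarrow> bool" where "Qb C \<longleftrightarrow> (\<forall>e\<in>edges C. 0 < len C e)"

lemma tropM_eq: "tropM = XX Qm cone"
  by (intro ext) (simp add: tropM_def XX_def trop_curve_def Qm_def)

lemma tropMbar_eq: "tropMbar = XX Qb ext_cone"
  by (intro ext) (simp add: tropMbar_def XX_def ext_trop_curve_def Qb_def)

lemma good_m: "good Qm cone"
  unfolding good_def
proof (intro conjI allI impI)
  fix G l assume l: "l \<in> cone G"
  show "Qm ((contract G {e \<in> edges G. l e = 0})\<lparr>len := l\<rparr>)"
    unfolding Qm_def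
  proof
    fix e assume "e \<in> edges ((contract G {e \<in> edges G. l e = 0})\<lparr>len := l\<rparr>)"
    then have e: "e \<in> edges G" "l e \<noteq> 0" by auto
    then have "0 \<le> l e" "l e < \<infinity>" using l unfolding cone_def by auto
    then show "0 < len ((contract G {e \<in> edges G. l e = 0})\<lparr>len := l\<rparr>) e \<and> len ((contract G {e \<in> edges G. l e = 0})\<lparr>len := l\<rparr>) e < \<infinity>"
      using e by (simp add: order_less_le)
  qed
next
  fix G :: tcurve and Y assume Y: "Y \<subseteq> edges G"
  show "cone (contract G Y) = {l \<in> cone G. \<forall>e\<in>Y. l e = 0}"
    unfolding cone_def using Y by auto
next
  fix G l e assume "l \<in> cone G" "e \<in> edges G" then show "0 \<le> l e" unfolding cone_def by auto
qed

lemma good_b: "good Qb ext_cone"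
  unfolding good_def
proof (intro conjI allI impI)
  fix G l assume l: "l \<in> ext_cone G"
  show "Qb ((contract G {e \<in> edges G. l e = 0})\<lparr>len := l\<rparr>)"
    unfolding Qb_def
  proof
    fix e assume "e \<in> edges ((contract G {e \<in> edges G. l e = 0})\<lparr>len := l\<rparr>)"
    then have e: "e \<in> edges G" "l e \<noteq> 0" by auto
    then have "0 \<le> l e" using l unfolding ext_cone_def by auto
    then show "0 < len ((contract G {e \<in> edges G. l e = 0})\<lparr>len := l\<rparr>) e"
      using e by (simp add: order_less_le)
  qed
next
  fix G :: tcurve and Y assume Y: "Y \<subseteq> edges G"
  show "ext_cone (contract G Y) = {l \<in> ext_cone G. \<forall>e\<in>Y. l e = 0}"
    unfolding ext_cone_def using Y by auto
next
  fix G l e assume "l \<in> ext_cone G" "e \<in> edges G" then show "0 \<le> l e" unfolding ext_cone_def by auto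
qed

lemma Qm_r: "\<forall>\<sigma> C. Qm (relabel \<sigma> C) = Qm C" by (simp add: Qm_def)
lemma Qb_r: "\<forall>\<sigma> C. Qb (relabel \<sigma> C) = Qb C" by (simp add: Qb_def)
lemma cone_r: "\<forall>\<sigma> G. cone (relabel \<sigma> G) = cone G" by (simp add: cone_def)
lemma ext_cone_r: "\<forall>\<sigma> G. ext_cone (relabel \<sigma> G) = ext_cone G" by (simp add: ext_cone_def)

lemma parts_XX:
  assumes gd: "good Q cn" and Qr: "\<forall>\<sigma> C. Q (relabel \<sigma> C) = Q C" and cr: "\<forall>\<sigma> G. cn (relabel \<sigma> G) = cn G"
    and g1: "g \<ge> 1"
  shows "(le_wt n a b \<longrightarrow> XX Q cn g n a = subtopology (XX Q cn g n b) (topspace (XX Q cn g n a)))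
   \<and> (same_chamber g n a b \<longrightarrow> XX Q cn g n a = XX Q cn g n b)
   \<and> ((\<exists>\<sigma>. \<sigma> permutes {1..n} \<and> (\<forall>i\<in>{1..n}. b i = a (\<sigma> i))) \<longrightarrow>
        (\<exists>\<tau>. \<tau> permutes {1..n} \<and> homeomorphic_map (XX Q cn g n a) (XX Q cn g n b) (relabel_map n \<tau>)))
   \<and> ((in_some_chamber g n a \<and> in_some_chamber g n b \<and>
        (\<exists>\<sigma>. \<sigma> permutes {1..n} \<and> perm_wt n \<sigma> ` chamber g n a = chamber g n b)) \<longrightarrow>
        (\<exists>\<tau>. \<tau> permutes {1..n} \<and> homeomorphic_map (XX Q cn g n a) (XX Q cn g n b) (relabel_map n \<tau>)))"
proof (intro conjI impI)
  assume "le_wt n a b"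
  then show "XX Q cn g n a = subtopology (XX Q cn g n b) (topspace (XX Q cn g n a))" by (rule part1_XX[OF gd])
next
  assume "same_chamber g n a b"
  then have "stable_graph g n a = stable_graph g n b" unfolding same_chamber_def by (rule chamber_stable_eq[OF g1])
  then show "XX Q cn g n a = XX Q cn g n b" unfolding XX_def by simp
next
  assume "\<exists>\<sigma>. \<sigma> permutes {1..n} \<and> (\<forall>i\<in>{1..n}. b i = a (\<sigma> i))"
  then obtain \<sigma> where s: "\<sigma> permutes {1..n}" "\<forall>i\<in>{1..n}. b i = a (\<sigma> i)" by blast
  show "\<exists>\<tau>. \<tau> permutes {1..n} \<and> homeomorphic_map (XX Q cn g n a) (XX Q cn g n b) (relabel_map n \<tau>)"
    using homeo_relabel[OF gd s Qr cr] s(1) by blast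
next
  assume h: "in_some_chamber g n a \<and> in_some_chamber g n b \<and>
        (\<exists>\<sigma>. \<sigma> permutes {1..n} \<and> perm_wt n \<sigma> ` chamber g n a = chamber g n b)"
  then obtain \<sigma> where s: "\<sigma> permutes {1..n}" "perm_wt n \<sigma> ` chamber g n a = chamber g n b" by blast
  define c where "c = perm_wt n \<sigma> a"
  have "a \<in> wregion g n - walls n" using h unfolding in_some_chamber_def by blast
  then have "a \<in> chamber g n a" unfolding chamber_def by (simp add: connected_component_refl)
  then have "c \<in> chamber g n b" using s(2) c_def by blast
  then have "connected_component (wregion g n - walls n) b c" unfolding chamber_def by simp
  then have "stable_graph g n b = stable_graph g n c" by (rule chamber_stable_eq[OF g1])
  then have eq: "XX Q cn g n c = XX Q cn g n b" unfolding XX_def by simp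
  have "\<forall>i\<in>{1..n}. c i = a (\<sigma> i)" unfolding c_def perm_wt_def by simp
  then have "homeomorphic_map (XX Q cn g n a) (XX Q cn g n c) (relabel_map n \<sigma>)"
    using homeo_relabel[OF gd s(1) _ Qr cr] by blast
  then show "\<exists>\<tau>. \<tau> permutes {1..n} \<and> homeomorphic_map (XX Q cn g n a) (XX Q cn g n b) (relabel_map n \<tau>)"
    using eq s(1) by auto
qed

lemma ex_total: "(\<exists>C\<in>iso_class n C0. total_len C = 1) \<longleftrightarrow> total_len C0 = 1"
proof
  assume "\<exists>C\<in>iso_class n C0. total_len C = 1"
  then obtain C where "curve_iso n C0 C" "total_len C = 1" unfolding iso_class_def by blast
  then show "total_len C0 = 1" using total_len_iso by metis
next
  assume "total_len C0 = 1"
  moreover have "C0 \<in> iso_class n C0" unfolding iso_class_def by (simp add: curve_iso_refl)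
  ultimately show "\<exists>C\<in>iso_class n C0. total_len C = 1" by blast
qed

lemma delta_homeo:
  assumes perm: "\<tau> permutes {1..n}" and hm: "homeomorphic_map (tropM g n a) (tropM g n b) (relabel_map n \<tau>)"
  shows "homeomorphic_map (tropDelta g n a) (tropDelta g n b) (relabel_map n \<tau>)"
  unfolding tropDelta_def
proof (rule homeomorphic_map_subtopologies_alt[OF hm])
  fix x assume x: "x \<in> topspace (tropM g n a)" and fx: "relabel_map n \<tau> x \<in> topspace (tropM g n b)"
  have "x \<in> PP Qm g n a" using x topspace_XX[OF good_m] tropM_eq by simp
  then obtain C0 where C0: "x = iso_class n C0" unfolding PP_def by blast
  have r: "relabel_map n \<tau> x = iso_class n (relabel \<tau> C0)" using relabel_map_iso[OF perm] C0 by simp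
  have t: "total_len (relabel \<tau> C0) = total_len C0" by (simp add: total_len_def)
  show "(relabel_map n \<tau> x \<in> {p \<in> topspace (tropM g n b). \<exists>C\<in>p. total_len C = 1}) =
        (x \<in> {p \<in> topspace (tropM g n a). \<exists>C\<in>p. total_len C = 1})"
    using x fx r t C0 ex_total by simp
qed

lemma delta_part1:
  assumes h: "tropM g n a = subtopology (tropM g n b) (topspace (tropM g n a))"
  shows "tropDelta g n a = subtopology (tropDelta g n b) (topspace (tropDelta g n a))"
proof -
  define Sa where "Sa = topspace (tropM g n a)"
  define Sb where "Sb = topspace (tropM g n b)"
  define Da where "Da = {p \<in> Sa. \<exists>C\<in>p. total_len C = 1}"
  define Db where "Db = {p \<in> Sb. \<exists>C\<in>p. total_len C = 1}"
  have SaSb: "Sa \<subseteq> Sb" using arg_cong[OF h, of topspace] unfolding Sa_def Sb_def by auto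
  have DaDb: "Da \<subseteq> Db" using SaSb unfolding Da_def Db_def by auto
  have dA: "tropDelta g n a = subtopology (tropM g n b) (Sa \<inter> Da)"
    unfolding tropDelta_def Sa_def[symmetric] Da_def[symmetric] using h subtopology_subtopology unfolding Sa_def by metis
  have tA: "topspace (tropDelta g n a) = Da" unfolding tropDelta_def Sa_def[symmetric] Da_def[symmetric]
    using Da_def Sa_def by auto
  have dB: "tropDelta g n b = subtopology (tropM g n b) Db"
    unfolding tropDelta_def Sb_def[symmetric] Db_def[symmetric] ..
  have "Sa \<inter> Da = Db \<inter> Da" using DaDb Da_def by auto
  then show ?thesis unfolding tA dB subtopology_subtopology using dA by simp
qed

theorem mainTheorem6:
  fixes g n :: nat and a b :: "nat \<Rightarrow> real"
  assumes "g \<ge> 1" and "n \<ge> 1"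
    and "weight_datum g n a" and "weight_datum g n b"
  shows "\<forall>X \<in> {tropM, tropMbar, tropDelta}.
     (le_wt n a b \<longrightarrow> X g n a = subtopology (X g n b) (topspace (X g n a)))
   \<and> (same_chamber g n a b \<longrightarrow> X g n a = X g n b)
   \<and> ((\<exists>\<sigma>. \<sigma> permutes {1..n} \<and> (\<forall>i\<in>{1..n}. b i = a (\<sigma> i))) \<longrightarrow>
        (\<exists>\<tau>. \<tau> permutes {1..n} \<and> homeomorphic_map (X g n a) (X g n b) (relabel_map n \<tau>)))
   \<and> ((in_some_chamber g n a \<and> in_some_chamber g n b \<and>
        (\<exists>\<sigma>. \<sigma> permutes {1..n} \<and> perm_wt n \<sigma> ` chamber g n a = chamber g n b)) \<longrightarrow>
        (\<exists>\<tau>. \<tau> permutes {1..n} \<and> homeomorphic_map (X g n a) (X g n b) (relabel_map n \<tau>)))"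
proof -
  note PM = parts_XX[OF good_m Qm_r cone_r assms(1), of n a b, folded tropM_eq]
  note PB = parts_XX[OF good_b Qb_r ext_cone_r assms(1), of n a b, folded tropMbar_eq]
  have PD: "(le_wt n a b \<longrightarrow> tropDelta g n a = subtopology (tropDelta g n b) (topspace (tropDelta g n a)))
   \<and> (same_chamber g n a b \<longrightarrow> tropDelta g n a = tropDelta g n b)
   \<and> ((\<exists>\<sigma>. \<sigma> permutes {1..n} \<and> (\<forall>i\<in>{1..n}. b i = a (\<sigma> i))) \<longrightarrow>
        (\<exists>\<tau>. \<tau> permutes {1..n} \<and> homeomorphic_map (tropDelta g n a) (tropDelta g n b) (relabel_map n \<tau>)))
   \<and> ((in_some_chamber g n a \<and> in_some_chamber g n b \<and>
        (\<exists>\<sigma>. \<sigma> permutes {1..n} \<and> perm_wt n \<sigma> ` chamber g n a = chamber g n b)) \<longrightarrow>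
        (\<exists>\<tau>. \<tau> permutes {1..n} \<and> homeomorphic_map (tropDelta g n a) (tropDelta g n b) (relabel_map n \<tau>)))"
  proof (intro conjI impI)
    assume "le_wt n a b" then show "tropDelta g n a = subtopology (tropDelta g n b) (topspace (tropDelta g n a))"
      using PM delta_part1 by blast
  next
    assume "same_chamber g n a b" then show "tropDelta g n a = tropDelta g n b"
      using PM unfolding tropDelta_def by simp
  next
    assume "\<exists>\<sigma>. \<sigma> permutes {1..n} \<and> (\<forall>i\<in>{1..n}. b i = a (\<sigma> i))"
    then obtain \<tau> where "\<tau> permutes {1..n}" "homeomorphic_map (tropM g n a) (tropM g n b) (relabel_map n \<tau>)"
      using PM by blast
    then show "\<exists>\<tau>. \<tau> permutes {1..n} \<and> homeomorphic_map (tropDelta g n a) (tropDelta g n b) (relabel_map n \<tau>)"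
      using delta_homeo by blast
  next
    assume "in_some_chamber g n a \<and> in_some_chamber g n b \<and>
        (\<exists>\<sigma>. \<sigma> permutes {1..n} \<and> perm_wt n \<sigma> ` chamber g n a = chamber g n b)"
    then obtain \<tau> where "\<tau> permutes {1..n}" "homeomorphic_map (tropM g n a) (tropM g n b) (relabel_map n \<tau>)"
      using PM by blast
    then show "\<exists>\<tau>. \<tau> permutes {1..n} \<and> homeomorphic_map (tropDelta g n a) (tropDelta g n b) (relabel_map n \<tau>)"
      using delta_homeo by blast
  qed
  show ?thesis
  proof (intro ballI)
    fix X assume "X \<in> {tropM, tropMbar, tropDelta}"
    then have "X = tropM \<or> X = tropMbar \<or> X = tropDelta" by simp
    then show "(le_wt n a b \<longrightarrow> X g n a = subtopology (X g n b) (topspace (X g n a)))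
   \<and> (same_chamber g n a b \<longrightarrow> X g n a = X g n b)
   \<and> ((\<exists>\<sigma>. \<sigma> permutes {1..n} \<and> (\<forall>i\<in>{1..n}. b i = a (\<sigma> i))) \<longrightarrow>
        (\<exists>\<tau>. \<tau> permutes {1..n} \<and> homeomorphic_map (X g n a) (X g n b) (relabel_map n \<tau>)))
   \<and> ((in_some_chamber g n a \<and> in_some_chamber g n b \<and>
        (\<exists>\<sigma>. \<sigma> permutes {1..n} \<and> perm_wt n \<sigma> ` chamber g n a = chamber g n b)) \<longrightarrow>
        (\<exists>\<tau>. \<tau> permutes {1..n} \<and> homeomorphic_map (X g n a) (X g n b) (relabel_map n \<tau>)))"
    proof (elim disjE)
      assume "X = tropM" then show ?thesis using PM by simp
    next
      assume "X = tropMbar" then show ?thesis using PB by simp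
    next
      assume "X = tropDelta" then show ?thesis using PD by simp
    qed
  qed
qed

end
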